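(* Let $A$ be a strongly AUF algebra, let $M\in\mathrm{Coh}_{\mathrm L}(A)$ be a projective generator of $\mathrm{Coh}_{\mathrm L}(A)$, and let $B=\mathrm{End}_{A,-}(M)^{\mathrm{op}}$, so that $M$ is an $A$-$B$ bimodule. Then $M$ has a left coordinate system and a right coordinate system. Moreover, the map $$\mathrm{SLF}(A)\to\mathrm{SLF}(B),\qquad \psi\mapsto {}^{\psi}\mathrm{Tr}$$ is a linear isomorphism, whose inverse is $$\mathrm{SLF}(B)\to\mathrm{SLF}(A),\qquad \phi\mapsto \mathrm{Tr}^{\phi},$$ where both pseudotraces are taken with respect to the $A$-$B$ bimodule $M$.
   Context: All algebras are associative $\mathbb C$-algebras, not necessarily unital. An idempotent is an element $e$ with $e^2=e$. An algebra $A$ is AUF if there is a family $(e_i)_{i\in\mathfrak I}$ of mutually orthogonal idempotents ($e_ie_j=0$ for $i\neq j$) with $\dim e_iAe_j<\infty$ for all $i,j$ and $A=\sum_{i,j\in\mathfrak I}e_iAe_j$ (every element is a finite sum of elements of the spaces $e_iAe_j$). A left $A$-module $M$ is quasicoherent if $\xi\in A\xi$ for all $\xi\in M$; it is coherent if it is quasicoherent and finitely generated; $\mathrm{Coh}_{\mathrm L}(A)$ is the category of coherent left $A$-modules. A left module is irreducible if it is nonzero and has no nonzero proper submodules. An idempotent $e\in A$ is generating if every irreducible quasicoherent left $A$-module is a quotient of $Ae$. An AUF algebra is strongly AUF if it has a generating idempotent. A projective generator of $\mathrm{Coh}_{\mathrm L}(A)$ is an $M\in \mathrm{Coh}_{\mathrm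 L}(A)$ that is projective as a left $A$-module and such that every $N\in\mathrm{Coh}_{\mathrm L}(A)$ is a quotient of $M^{\oplus n}$ for some $n\ge1$. $\mathrm{Hom}_{A,-}$ denotes left $A$-module maps, $\mathrm{Hom}_{-,B}$ right $B$-module maps; $B=\mathrm{End}_{A,-}(M)^{\mathrm{op}}$ acts on $M$ on the right by $\xi\cdot T=T(\xi)$; for $y\in B$ write $y^{\mathrm{op}}$ for the corresponding map $\xi\mapsto \xi y$ in $\mathrm{End}_{A,-}(M)$. For an algebra $C$, $\mathrm{SLF}(C)$ is the space of linear maps $\phi:C\to\mathbb C$ with $\phi(xy)=\phi(yx)$ for all $x,y$. Left coordinate system (for algebras $A$, $B$ with $B$ unital, and an $A$-$B$ bimodule $M$): a family $\alpha_i\in\mathrm{Hom}_{-,B}(B,M)$, $\check\alpha^i\in\mathrm{Hom}_{-,B}(M,B)$, $i\in I$, such that (a) for each $\xi\in M$, $\check\alpha^i(\xi)=0$ for all but finitely many $i$ and $\sum_i\alpha_i\check\alpha^i(\xi)=\xi$; (b) for each $x\in A$ (acting on $M$), $x\circ\alpha_i=0$ and $\check\alpha^i\circ x=0$ for all but finitely many $i$. The left pseudotrace of $\phi\in\mathrm{SLF}(B)$ is $\mathrm{Tr}^\phi(x)=\sum_i\phi\big(\check\alpha^i(x\,\alpha_i(1_B))\big)$ for $x\in A$; it is a well-defined element of $\mathrm{SLF}(A)$ independent of the left coordinate system. Right coordinate system (for $A$ AUF, $B$ unital, $M$ an $A$-$B$ bimodule that is coherent as a left $A$-module): an idempotent $e\in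 A$ and a finite family $\beta_j\in\mathrm{Hom}_{A,-}(Ae,M)$, $\check\beta^j\in\mathrm{Hom}_{A,-}(M,Ae)$ with $\sum_j\beta_j\circ\check\beta^j=\mathrm{id}_M$. The right pseudotrace of $\psi\in\mathrm{SLF}(A)$ is ${}^\psi\mathrm{Tr}(y)=\sum_j\psi\big(\check\beta^j(\beta_j(e)\,y)\big)$ for $y\in B$ (note $\check\beta^j(\beta_j(e)y)\in eAe$); it is a well-defined element of $\mathrm{SLF}(B)$ independent of the right coordinate system. *)

theory Defs
  imports Complex_Main "HOL-Library.Function_Algebras"
begin

text \<open>An associative, not necessarily unital complex algebra is a type of class ring
  (a non-unital ring) together with a complex scalar multiplication sA making it a
  complex vector space such that the product is bilinear.\<close>

definition calg :: "(complex \<Rightarrow> 'a::ring \<Rightarrow> 'a) \<Rightarrow> bool" where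
  "calg sA \<longleftrightarrow> vector_space sA \<and>
     (\<forall>c x y. sA c (x * y) = sA c x * y \<and> sA c (x * y) = x * sA c y)"

definition idem :: "'a::ring \<Rightarrow> bool" where
  "idem e \<longleftrightarrow> e * e = e"

text \<open>AUF: a family of mutually orthogonal idempotents (represented as a set E of
  idempotents) with finite-dimensional corners e A f whose sum is all of A.\<close>

definition AUF :: "(complex \<Rightarrow> 'a::ring \<Rightarrow> 'a) \<Rightarrow> bool" where
  "AUF sA \<longleftrightarrow> calg sA \<and>
    (\<exists>E::'a set.
       (\<forall>e\<in>E. idem e) \<and>
       (\<forall>e\<in>E. \<forall>f\<in>E. e \<noteq> f \<longrightarrow> e * f = 0) \<and>
       (\<forall>e\<in>E. \<forall>f\<in>E. \<exists>F. finite F \<and> {e * x * f | x. True} \<subseteq> module.span sA F) \<and>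
       (\<forall>x. \<exists>F y. finite F \<and> F \<subseteq> E \<times> E \<and>
              x = (\<Sum>p\<in>F. fst p * y p * snd p)))"

text \<open>A left A-module is given by a carrier S inside an ambient complex vector space
  (type 'v with scalar multiplication sV) together with an action act.\<close>

definition is_sub :: "(complex \<Rightarrow> 'v::ab_group_add \<Rightarrow> 'v) \<Rightarrow> ('a \<Rightarrow> 'v \<Rightarrow> 'v) \<Rightarrow> 'v set \<Rightarrow> bool" where
  "is_sub sV act T \<longleftrightarrow> 0 \<in> T \<and> (\<forall>x\<in>T. \<forall>y\<in>T. x + y \<in> T) \<and>
     (\<forall>c. \<forall>x\<in>T. sV c x \<in> T) \<and> (\<forall>a. \<forall>x\<in>T. act a x \<in> T)"

definition is_lmod :: "(complex \<Rightarrow> 'a::ring \<Rightarrow> 'a) \<Rightarrow> (complex \<Rightarrow> 'v::ab_group_add \<Rightarrow> 'v)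
    \<Rightarrow> ('a \<Rightarrow> 'v \<Rightarrow> 'v) \<Rightarrow> 'v set \<Rightarrow> bool" where
  "is_lmod sA sV act S \<longleftrightarrow> vector_space sV \<and> is_sub sV act S \<and>
     (\<forall>a b. \<forall>x\<in>S. act (a * b) x = act a (act b x)) \<and>
     (\<forall>a b. \<forall>x\<in>S. act (a + b) x = act a x + act b x) \<and>
     (\<forall>a. \<forall>x\<in>S. \<forall>y\<in>S. act a (x + y) = act a x + act a y) \<and>
     (\<forall>c a. \<forall>x\<in>S. act (sA c a) x = sV c (act a x)) \<and>
     (\<forall>c a. \<forall>x\<in>S. act a (sV c x) = sV c (act a x))"

definition lhom :: "(complex \<Rightarrow> 'v::ab_group_add \<Rightarrow> 'v) \<Rightarrow> (complex \<Rightarrow> 'w::ab_group_add \<Rightarrow> 'w)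
    \<Rightarrow> ('a \<Rightarrow> 'v \<Rightarrow> 'v) \<Rightarrow> ('a \<Rightarrow> 'w \<Rightarrow> 'w) \<Rightarrow> 'v set \<Rightarrow> 'w set \<Rightarrow> ('v \<Rightarrow> 'w) \<Rightarrow> bool" where
  "lhom sV sW actV actW S T f \<longleftrightarrow> (\<forall>x\<in>S. f x \<in> T) \<and>
     (\<forall>x\<in>S. \<forall>y\<in>S. f (x + y) = f x + f y) \<and>
     (\<forall>c. \<forall>x\<in>S. f (sV c x) = sW c (f x)) \<and>
     (\<forall>a. \<forall>x\<in>S. f (actV a x) = actW a (f x))"

definition quasicoherent :: "('a \<Rightarrow> 'v \<Rightarrow> 'v) \<Rightarrow> 'v set \<Rightarrow> bool" where
  "quasicoherent act S \<longleftrightarrow> (\<forall>\<xi>\<in>S. \<exists>x. act x \<xi> = \<xi>)"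

definition gen_sub :: "(complex \<Rightarrow> 'v::ab_group_add \<Rightarrow> 'v) \<Rightarrow> ('a \<Rightarrow> 'v \<Rightarrow> 'v) \<Rightarrow> 'v set \<Rightarrow> 'v set" where
  "gen_sub sV act G = \<Inter>{T. is_sub sV act T \<and> G \<subseteq> T}"

definition fin_gen :: "(complex \<Rightarrow> 'v::ab_group_add \<Rightarrow> 'v) \<Rightarrow> ('a \<Rightarrow> 'v \<Rightarrow> 'v) \<Rightarrow> 'v set \<Rightarrow> bool" where
  "fin_gen sV act S \<longleftrightarrow> (\<exists>G. finite G \<and> G \<subseteq> S \<and> S = gen_sub sV act G)"

definition coherent :: "(complex \<Rightarrow> 'a::ring \<Rightarrow> 'a) \<Rightarrow> (complex \<Rightarrow> 'v::ab_group_add \<Rightarrow> 'v)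
    \<Rightarrow> ('a \<Rightarrow> 'v \<Rightarrow> 'v) \<Rightarrow> 'v set \<Rightarrow> bool" where
  "coherent sA sV act S \<longleftrightarrow> is_lmod sA sV act S \<and> quasicoherent act S \<and> fin_gen sV act S"

definition irreducible_mod :: "(complex \<Rightarrow> 'a::ring \<Rightarrow> 'a) \<Rightarrow> (complex \<Rightarrow> 'v::ab_group_add \<Rightarrow> 'v)
    \<Rightarrow> ('a \<Rightarrow> 'v \<Rightarrow> 'v) \<Rightarrow> 'v set \<Rightarrow> bool" where
  "irreducible_mod sA sV act S \<longleftrightarrow> is_lmod sA sV act S \<and> S \<noteq> {0} \<and>
     (\<forall>T. T \<subseteq> S \<and> is_sub sV act T \<longrightarrow> T = {0} \<or> T = S)"

text \<open>The left ideal A e, as a left module (carrier inside A, action by left multiplication).\<close>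

definition Ae :: "'a::ring \<Rightarrow> 'a set" where
  "Ae e = {x * e | x. True}"

text \<open>Statements quantifying over all left A-modules are rendered by quantifying over
  all modules whose carrier lies in the ambient complex vector space of all functions
  ('a \<times> nat) \<Rightarrow> complex.  Every module occurring in these quantifications (irreducible
  quasicoherent modules, coherent modules, and the modules relevant to the lifting
  property of a finitely generated module) has complex dimension at most the
  cardinality of 'a \<times> nat, hence has an isomorphic copy in this universe.\<close>

type_synonym 'a univ = "'a \<times> nat \<Rightarrow> complex"

definition uscale :: "complex \<Rightarrow> 'a univ \<Rightarrow> 'a univ" where
  "uscale c f = (\<lambda>k. c * f k)"

definition generating_idem :: "(complex \<Rightarrow> 'a::ring \<Rightarrow> 'a) \<Rightarrow> 'a \<Rightarrow> bool" where
  "generating_idem sA e \<longleftrightarrow> idem e \<and>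
     (\<forall>(act :: 'a \<Rightarrow> 'a univ \<Rightarrow> 'a univ) S.
        irreducible_mod sA uscale act S \<and> quasicoherent act S \<longrightarrow>
        (\<exists>q. lhom sA uscale (*) act (Ae e) S q \<and> q ` Ae e = S))"

definition strongly_AUF :: "(complex \<Rightarrow> 'a::ring \<Rightarrow> 'a) \<Rightarrow> bool" where
  "strongly_AUF sA \<longleftrightarrow> AUF sA \<and> (\<exists>e. generating_idem sA e)"

definition lprojective :: "(complex \<Rightarrow> 'a::ring \<Rightarrow> 'a) \<Rightarrow> (complex \<Rightarrow> 'm::ab_group_add \<Rightarrow> 'm)
    \<Rightarrow> ('a \<Rightarrow> 'm \<Rightarrow> 'm) \<Rightarrow> 'm set \<Rightarrow> bool" where
  "lprojective sA sM actM SM \<longleftrightarrow>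
     (\<forall>(act1 :: 'a \<Rightarrow> 'a univ \<Rightarrow> 'a univ) S1 (act2 :: 'a \<Rightarrow> 'a univ \<Rightarrow> 'a univ) S2 f g.
        is_lmod sA uscale act1 S1 \<and> is_lmod sA uscale act2 S2 \<and>
        lhom uscale uscale act1 act2 S1 S2 f \<and> f ` S1 = S2 \<and>
        lhom sM uscale actM act2 SM S2 g \<longrightarrow>
        (\<exists>h. lhom sM uscale actM act1 SM S1 h \<and> (\<forall>\<xi>\<in>SM. f (h \<xi>) = g \<xi>)))"

text \<open>N is a quotient of M^{\<oplus> n}: there are module maps h_0..h_{n-1} : M \<rightarrow> N
  whose sum M^{\<oplus> n} \<rightarrow> N is surjective.\<close>

definition quotient_of_power :: "(complex \<Rightarrow> 'm::ab_group_add \<Rightarrow> 'm) \<Rightarrow> ('a \<Rightarrow> 'm \<Rightarrow> 'm) \<Rightarrow> 'm set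
    \<Rightarrow> (complex \<Rightarrow> 'v::ab_group_add \<Rightarrow> 'v) \<Rightarrow> ('a \<Rightarrow> 'v \<Rightarrow> 'v) \<Rightarrow> 'v set \<Rightarrow> nat \<Rightarrow> bool" where
  "quotient_of_power sM actM SM sV act S n \<longleftrightarrow>
     (\<exists>h. (\<forall>i<n. lhom sM sV actM act SM S (h i)) \<and>
          (\<forall>y\<in>S. \<exists>\<xi>. (\<forall>i<n. \<xi> i \<in> SM) \<and> y = (\<Sum>i<n. h i (\<xi> i))))"

definition proj_generator :: "(complex \<Rightarrow> 'a::ring \<Rightarrow> 'a) \<Rightarrow> (complex \<Rightarrow> 'm::ab_group_add \<Rightarrow> 'm)
    \<Rightarrow> ('a \<Rightarrow> 'm \<Rightarrow> 'm) \<Rightarrow> bool" where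
  "proj_generator sA sM actM \<longleftrightarrow> coherent sA sM actM UNIV \<and> lprojective sA sM actM UNIV \<and>
     (\<forall>(act :: 'a \<Rightarrow> 'a univ \<Rightarrow> 'a univ) S. coherent sA uscale act S \<longrightarrow>
        (\<exists>n\<ge>1. quotient_of_power sM actM UNIV uscale act S n))"

text \<open>B consists of all A-module
  endomorphisms of M; the product in B is y1 \<cdot> y2 = y2 \<circ> y1, the unit is id, and
  M is a right B-module via \<xi> \<cdot> T = T \<xi>.\<close>

definition Bset :: "(complex \<Rightarrow> 'm::ab_group_add \<Rightarrow> 'm) \<Rightarrow> ('a \<Rightarrow> 'm \<Rightarrow> 'm) \<Rightarrow> ('m \<Rightarrow> 'm) set" where
  "Bset sM actM = {T. lhom sM sM actM actM UNIV UNIV T}"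

definition bmult :: "('m \<Rightarrow> 'm) \<Rightarrow> ('m \<Rightarrow> 'm) \<Rightarrow> ('m \<Rightarrow> 'm)" where
  "bmult y1 y2 = y2 \<circ> y1"

definition badd :: "('m \<Rightarrow> 'm) \<Rightarrow> ('m \<Rightarrow> 'm) \<Rightarrow> ('m::ab_group_add \<Rightarrow> 'm)" where
  "badd y1 y2 = (\<lambda>\<xi>. y1 \<xi> + y2 \<xi>)"

definition bscale :: "(complex \<Rightarrow> 'm \<Rightarrow> 'm) \<Rightarrow> complex \<Rightarrow> ('m \<Rightarrow> 'm) \<Rightarrow> ('m \<Rightarrow> 'm)" where
  "bscale sM c y = (\<lambda>\<xi>. sM c (y \<xi>))"

definition bzero :: "'m \<Rightarrow> 'm::zero" where
  "bzero = (\<lambda>\<xi>. 0)"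

definition SLF_A :: "(complex \<Rightarrow> 'a::ring \<Rightarrow> 'a) \<Rightarrow> ('a \<Rightarrow> complex) set" where
  "SLF_A sA = {\<phi>. (\<forall>x y. \<phi> (x + y) = \<phi> x + \<phi> y) \<and> (\<forall>c x. \<phi> (sA c x) = c * \<phi> x) \<and>
                   (\<forall>x y. \<phi> (x * y) = \<phi> (y * x))}"

text \<open>Functionals on B are functions on the type 'm \<Rightarrow> 'm; we normalise them to be 0
  outside the carrier of B, so that SLF(B) is a genuine set of functionals on B.\<close>

definition SLF_B :: "(complex \<Rightarrow> 'm::ab_group_add \<Rightarrow> 'm) \<Rightarrow> ('a \<Rightarrow> 'm \<Rightarrow> 'm) \<Rightarrow> (('m \<Rightarrow> 'm) \<Rightarrow> complex) set" where
  "SLF_B sM actM = {\<phi>. (\<forall>y. y \<notin> Bset sM actM \<longrightarrow> \<phi> y = 0) \<and>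
     (\<forall>y1\<in>Bset sM actM. \<forall>y2\<in>Bset sM actM. \<phi> (badd y1 y2) = \<phi> y1 + \<phi> y2) \<and>
     (\<forall>c. \<forall>y\<in>Bset sM actM. \<phi> (bscale sM c y) = c * \<phi> y) \<and>
     (\<forall>y1\<in>Bset sM actM. \<forall>y2\<in>Bset sM actM. \<phi> (bmult y1 y2) = \<phi> (bmult y2 y1))}"

text \<open>Right B-module maps B \<rightarrow> M (B acting on itself by right multiplication).\<close>

definition hom_BM :: "(complex \<Rightarrow> 'm::ab_group_add \<Rightarrow> 'm) \<Rightarrow> ('a \<Rightarrow> 'm \<Rightarrow> 'm) \<Rightarrow> (('m \<Rightarrow> 'm) \<Rightarrow> 'm) \<Rightarrow> bool" where
  "hom_BM sM actM \<alpha> \<longleftrightarrow>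
     (\<forall>y1\<in>Bset sM actM. \<forall>y2\<in>Bset sM actM. \<alpha> (badd y1 y2) = \<alpha> y1 + \<alpha> y2) \<and>
     (\<forall>c. \<forall>y\<in>Bset sM actM. \<alpha> (bscale sM c y) = sM c (\<alpha> y)) \<and>
     (\<forall>y1\<in>Bset sM actM. \<forall>y2\<in>Bset sM actM. \<alpha> (bmult y1 y2) = y2 (\<alpha> y1))"

definition hom_MB :: "(complex \<Rightarrow> 'm::ab_group_add \<Rightarrow> 'm) \<Rightarrow> ('a \<Rightarrow> 'm \<Rightarrow> 'm) \<Rightarrow> ('m \<Rightarrow> ('m \<Rightarrow> 'm)) \<Rightarrow> bool" where
  "hom_MB sM actM \<beta> \<longleftrightarrow> (\<forall>\<xi>. \<beta> \<xi> \<in> Bset sM actM) \<and>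
     (\<forall>\<xi> \<eta>. \<beta> (\<xi> + \<eta>) = badd (\<beta> \<xi>) (\<beta> \<eta>)) \<and>
     (\<forall>c \<xi>. \<beta> (sM c \<xi>) = bscale sM c (\<beta> \<xi>)) \<and>
     (\<forall>\<xi>. \<forall>y\<in>Bset sM actM. \<beta> (y \<xi>) = bmult (\<beta> \<xi>) y)"

text \<open>A left coordinate system, given as a set L of pairs (\<alpha>_i, \<alpha>-check^i).\<close>

definition left_coord :: "(complex \<Rightarrow> 'm::ab_group_add \<Rightarrow> 'm) \<Rightarrow> ('a \<Rightarrow> 'm \<Rightarrow> 'm)
    \<Rightarrow> ((('m \<Rightarrow> 'm) \<Rightarrow> 'm) \<times> ('m \<Rightarrow> ('m \<Rightarrow> 'm))) set \<Rightarrow> bool" where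
  "left_coord sM actM L \<longleftrightarrow>
     (\<forall>p\<in>L. hom_BM sM actM (fst p) \<and> hom_MB sM actM (snd p)) \<and>
     (\<forall>\<xi>. finite {p\<in>L. snd p \<xi> \<noteq> bzero} \<and>
          (\<Sum>p\<in>{p\<in>L. snd p \<xi> \<noteq> bzero}. fst p (snd p \<xi>)) = \<xi>) \<and>
     (\<forall>x. finite {p\<in>L. (\<exists>y\<in>Bset sM actM. actM x (fst p y) \<noteq> 0) \<or>
                        (\<exists>\<xi>. snd p (actM x \<xi>) \<noteq> bzero)})"

text \<open>Left pseudotrace Tr^\<phi>(x) = \<Sum>_i \<phi>(\<alpha>-check^i(x \<alpha>_i(1_B))); all but finitely many
  summands vanish, and we sum over the indices with nonzero argument.\<close>

definition left_ptr :: "('a \<Rightarrow> 'm::zero \<Rightarrow> 'm) \<Rightarrow> ((('m \<Rightarrow> 'm) \<Rightarrow> 'm) \<times> ('m \<Rightarrow> ('m \<Rightarrow> 'm))) set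
    \<Rightarrow> (('m \<Rightarrow> 'm) \<Rightarrow> complex) \<Rightarrow> 'a \<Rightarrow> complex" where
  "left_ptr actM L \<phi> x =
     (\<Sum>p\<in>{p\<in>L. snd p (actM x (fst p id)) \<noteq> (\<lambda>\<xi>. 0)}. \<phi> (snd p (actM x (fst p id))))"

text \<open>A right coordinate system: idempotent e, and a finite family (indexed by j < n)
  of module maps \<beta>_j : A e \<rightarrow> M and \<beta>-check^j : M \<rightarrow> A e with \<Sum> \<beta>_j \<circ> \<beta>-check^j = id.\<close>

definition right_coord :: "(complex \<Rightarrow> 'a::ring \<Rightarrow> 'a) \<Rightarrow> (complex \<Rightarrow> 'm::ab_group_add \<Rightarrow> 'm)
    \<Rightarrow> ('a \<Rightarrow> 'm \<Rightarrow> 'm) \<Rightarrow> 'a \<Rightarrow> nat \<Rightarrow> (nat \<Rightarrow> 'a \<Rightarrow> 'm) \<Rightarrow> (nat \<Rightarrow> 'm \<Rightarrow> 'a) \<Rightarrow> bool" where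
  "right_coord sA sM actM e n \<beta> \<beta>c \<longleftrightarrow> idem e \<and>
     (\<forall>j<n. lhom sA sM (*) actM (Ae e) UNIV (\<beta> j) \<and> lhom sM sA actM (*) UNIV (Ae e) (\<beta>c j)) \<and>
     (\<forall>\<xi>. (\<Sum>j<n. \<beta> j (\<beta>c j \<xi>)) = \<xi>)"

text \<open>Right pseudotrace {}^\<psi>Tr(y) = \<Sum>_j \<psi>(\<beta>-check^j(\<beta>_j(e) \<cdot> y)), with \<xi> \<cdot> y = y \<xi>;
  set to 0 outside B.\<close>

definition right_ptr :: "(complex \<Rightarrow> 'm::ab_group_add \<Rightarrow> 'm) \<Rightarrow> ('a \<Rightarrow> 'm \<Rightarrow> 'm) \<Rightarrow> 'a \<Rightarrow> nat
    \<Rightarrow> (nat \<Rightarrow> 'a \<Rightarrow> 'm) \<Rightarrow> (nat \<Rightarrow> 'm \<Rightarrow> 'a) \<Rightarrow> ('a \<Rightarrow> complex) \<Rightarrow> ('m \<Rightarrow> 'm) \<Rightarrow> complex" where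
  "right_ptr sM actM e n \<beta> \<beta>c \<psi> y =
     (if y \<in> Bset sM actM then (\<Sum>j<n. \<psi> (\<beta>c j (y (\<beta> j e)))) else 0)"

end

theory Submission
  imports Defs
begin

lemma vs_uscale: "vector_space (uscale :: complex \<Rightarrow> 'b univ \<Rightarrow> 'b univ)"
  unfolding vector_space_def uscale_def by (auto simp: fun_eq_iff algebra_simps)

lemma emb_exists:
  fixes s :: "complex \<Rightarrow> 'v::ab_group_add \<Rightarrow> 'v" and \<phi> :: "'i \<Rightarrow> 'v"
  assumes vs: "vector_space s" and sp: "UNIV \<subseteq> module.span s (range \<phi>)"
  shows "\<exists>\<iota>::'v \<Rightarrow> 'i \<Rightarrow> complex. (\<forall>x y. \<iota> (x+y) = (\<lambda>i. \<iota> x i + \<iota> y i)) \<and>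
     (\<forall>c x. \<iota> (s c x) = (\<lambda>i. c * \<iota> x i)) \<and> inj \<iota>"
proof -
  interpret vector_space s by (rule vs)
  obtain Bs where Bs: "Bs \<subseteq> range \<phi>" "independent Bs" "range \<phi> \<subseteq> span Bs"
    using maximal_independent_subset by blast
  have sp2: "x \<in> span Bs" for x
    using sp span_minimal[OF Bs(3) subspace_span] by blast
  define idx where "idx b = (SOME i. \<phi> i = b)" for b
  define \<iota> where "\<iota> x = (\<lambda>i. if \<phi> i \<in> Bs \<and> i = idx (\<phi> i) then representation Bs x (\<phi> i) else 0)" for x
  have idx: "\<phi> (idx b) = b" if "b \<in> Bs" for b
    using that Bs(1) unfolding idx_def by (metis (mono_tags, lifting) imageE someI subsetD)
  have "\<forall>x y. \<iota> (x+y) = (\<lambda>i. \<iota> x i + \<iota> y i)"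
    using representation_add[OF Bs(2) sp2 sp2] by (auto simp: \<iota>_def fun_eq_iff)
  moreover have "\<forall>c x. \<iota> (s c x) = (\<lambda>i. c * \<iota> x i)"
    using representation_scale[OF Bs(2) sp2] by (auto simp: \<iota>_def fun_eq_iff)
  moreover have "inj \<iota>"
  proof (rule injI)
    fix x y assume eq: "\<iota> x = \<iota> y"
    have "representation Bs x b = representation Bs y b" for b
    proof (cases "b \<in> Bs")
      case True
      then have "\<iota> x (idx b) = representation Bs x b" "\<iota> y (idx b) = representation Bs y b"
        using idx[OF True] by (auto simp: \<iota>_def)
      then show ?thesis using eq by metis
    next
      case False
      then show ?thesis using representation_ne_zero by metis
    qed
    then have "representation Bs x = representation Bs y" by blast
    note r = this
    have "x = (\<Sum>b | representation Bs x b \<noteq> 0. s (representation Bs x b) b)"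
      using sum_nonzero_representation_eq[OF Bs(2) sp2, of x] by simp
    also have "\<dots> = (\<Sum>b | representation Bs y b \<noteq> 0. s (representation Bs y b) b)"
      by (simp only: r)
    also have "\<dots> = y" using sum_nonzero_representation_eq[OF Bs(2) sp2, of y] by simp
    finally show "x = y" .
  qed
  ultimately show ?thesis by blast
qed

lemma transport_lmod:
  fixes \<Phi> :: "'w::ab_group_add \<Rightarrow> 'b univ" and s :: "complex \<Rightarrow> 'w \<Rightarrow> 'w"
    and act0 :: "'a::ring \<Rightarrow> 'w \<Rightarrow> 'w" and sA :: "complex \<Rightarrow> 'a \<Rightarrow> 'a"
  assumes add: "\<forall>x\<in>D. \<forall>y\<in>D. \<Phi> (x+y) = \<Phi> x + \<Phi> y"
   and scl: "\<forall>c. \<forall>x\<in>D. \<Phi> (s c x) = uscale c (\<Phi> x)"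
   and inj: "inj_on \<Phi> D"
   and D: "0 \<in> D" "\<forall>x\<in>D. \<forall>y\<in>D. x+y \<in> D" "\<forall>c. \<forall>x\<in>D. s c x \<in> D" "\<forall>a. \<forall>x\<in>D. act0 a x \<in> D"
   and laws: "\<forall>a b. \<forall>x\<in>D. act0 (a*b) x = act0 a (act0 b x)"
    "\<forall>a b. \<forall>x\<in>D. act0 (a+b) x = act0 a x + act0 b x"
    "\<forall>a. \<forall>x\<in>D. \<forall>y\<in>D. act0 a (x+y) = act0 a x + act0 a y"
    "\<forall>c a. \<forall>x\<in>D. act0 (sA c a) x = s c (act0 a x)"
    "\<forall>c a. \<forall>x\<in>D. act0 a (s c x) = s c (act0 a x)"
  shows "is_lmod sA uscale (\<lambda>a v. \<Phi> (act0 a (inv_into D \<Phi> v))) (\<Phi> ` D)"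
proof -
  have iv: "inv_into D \<Phi> (\<Phi> x) = x" if "x \<in> D" for x using inj that by (simp add: inv_into_f_f)
  have z: "\<Phi> 0 = 0" using add D(1) by (metis add.right_neutral add_cancel_right_right)
  show ?thesis
    unfolding is_lmod_def is_sub_def
  proof (intro conjI allI ballI)
    show "vector_space (uscale :: complex \<Rightarrow> 'b univ \<Rightarrow> 'b univ)" by (rule vs_uscale)
    show "0 \<in> \<Phi> ` D" using z D(1) by force
  next
    fix x y assume "x \<in> \<Phi> ` D" "y \<in> \<Phi> ` D"
    then obtain x' y' where "x' \<in> D" "y' \<in> D" "x = \<Phi> x'" "y = \<Phi> y'" by blast
    then show "x + y \<in> \<Phi> ` D" using add D by (metis image_eqI)
    fix a
    show "\<Phi> (act0 a (inv_into D \<Phi> (x + y))) = \<Phi> (act0 a (inv_into D \<Phi> x)) + \<Phi> (act0 a (inv_into D \<Phi> y))"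
      using \<open>x' \<in> D\<close> \<open>y' \<in> D\<close> \<open>x = \<Phi> x'\<close> \<open>y = \<Phi> y'\<close> add D laws iv by metis
  next
    fix c x assume "x \<in> \<Phi> ` D"
    then obtain x' where "x' \<in> D" "x = \<Phi> x'" by blast
    then show "uscale c x \<in> \<Phi> ` D" using scl D by (metis image_eqI)
  next
    fix a x assume "x \<in> \<Phi> ` D"
    then obtain x' where "x' \<in> D" "x = \<Phi> x'" by blast
    then show "\<Phi> (act0 a (inv_into D \<Phi> x)) \<in> \<Phi> ` D" using iv D by auto
  next
    fix a b x assume "x \<in> \<Phi> ` D"
    then obtain x' where x': "x' \<in> D" "x = \<Phi> x'" by blast
    show "\<Phi> (act0 (a * b) (inv_into D \<Phi> x)) = \<Phi> (act0 a (inv_into D \<Phi> (\<Phi> (act0 b (inv_into D \<Phi> x)))))"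
      using x' iv D laws by auto
    show "\<Phi> (act0 (a + b) (inv_into D \<Phi> x)) = \<Phi> (act0 a (inv_into D \<Phi> x)) + \<Phi> (act0 b (inv_into D \<Phi> x))"
      using x' iv D laws add by auto
  next
    fix c a x assume "x \<in> \<Phi> ` D"
    then obtain x' where x': "x' \<in> D" "x = \<Phi> x'" by blast
    show "\<Phi> (act0 (sA c a) (inv_into D \<Phi> x)) = uscale c (\<Phi> (act0 a (inv_into D \<Phi> x)))"
      using x' iv D laws scl by auto
    show "\<Phi> (act0 a (inv_into D \<Phi> (uscale c x))) = uscale c (\<Phi> (act0 a (inv_into D \<Phi> x)))"
      using x' iv D laws scl by (metis)
  qed
qed

lemma sum_fun_apply: "(sum f A) x = (\<Sum>a\<in>A. f a x)"
  by (induction A rule: infinite_finite_induct) auto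

locale ctx =
  fixes sA :: "complex \<Rightarrow> 'a::ring \<Rightarrow> 'a" and sM :: "complex \<Rightarrow> 'm::ab_group_add \<Rightarrow> 'm"
    and actM :: "'a \<Rightarrow> 'm \<Rightarrow> 'm" and E :: "'a set"
  assumes calg: "calg sA"
  and Eidem: "\<forall>e\<in>E. e*e = e"
  and Eorth: "\<forall>e\<in>E. \<forall>f\<in>E. e \<noteq> f \<longrightarrow> e * f = 0"
  and Edec: "\<forall>x. \<exists>F y. finite F \<and> F \<subseteq> E \<times> E \<and> x = (\<Sum>p\<in>F. fst p * y p * snd p)"
  and lmod: "is_lmod sA sM actM UNIV"
  and qc: "quasicoherent actM UNIV"
begin

lemma vsA: "vector_space sA" using calg by (simp add: calg_def)
lemma sA_mult1: "sA c (x*y) = sA c x * y" using calg by (simp add: calg_def)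
lemma sA_mult2: "sA c (x*y) = x * sA c y" using calg unfolding calg_def by blast
lemma vsM: "vector_space sM" using lmod by (simp add: is_lmod_def)

lemma act_mult[simp]: "actM (a*b) x = actM a (actM b x)" using lmod by (simp add: is_lmod_def)
lemma act_addl[simp]: "actM (a+b) x = actM a x + actM b x" using lmod by (simp add: is_lmod_def)
lemma act_addr[simp]: "actM a (x+y) = actM a x + actM a y" using lmod by (simp add: is_lmod_def)
lemma act_sA[simp]: "actM (sA c a) x = sM c (actM a x)" using lmod by (simp add: is_lmod_def)
lemma act_sM[simp]: "actM a (sM c x) = sM c (actM a x)" using lmod by (simp add: is_lmod_def)
lemma act_0l[simp]: "actM 0 x = 0" using act_addl[of 0 0 x] by simp
lemma act_0r[simp]: "actM a 0 = 0" using act_addr[of a 0 0] by simp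
lemma act_suml: "actM (sum f I) x = (\<Sum>i\<in>I. actM (f i) x)"
  by (induction I rule: infinite_finite_induct) auto
lemma act_sumr: "actM a (sum f I) = (\<Sum>i\<in>I. actM a (f i))"
  by (induction I rule: infinite_finite_induct) auto
lemma qc': "\<exists>x. actM x \<xi> = \<xi>" using qc by (simp add: quasicoherent_def)

lemma sM_add[simp]: "sM c (x+y) = sM c x + sM c y"
  using vsM by (simp add: vector_space_def)
lemma sM_0r[simp]: "sM c 0 = 0" using sM_add[of c 0 0] by simp
lemma sM_sum: "sM c (sum f I) = (\<Sum>i\<in>I. sM c (f i))"
  by (induction I rule: infinite_finite_induct) auto
lemma sA_add: "sA c (x+y) = sA c x + sA c y"
  using vsA by (simp add: vector_space_def)

lemma loc:
  "\<exists>K. finite K \<and> K \<subseteq> E \<and> (\<forall>k\<in>E. k \<notin> K \<longrightarrow> k*x = 0 \<and> x*k = 0) \<and>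
     (\<forall>K'. K \<subseteq> K' \<and> K' \<subseteq> E \<and> finite K' \<longrightarrow> x = (\<Sum>k\<in>K'. x*k) \<and> x = (\<Sum>k\<in>K'. k*x))"
proof -
  obtain F y where F: "finite F" "F \<subseteq> E \<times> E" and x: "x = (\<Sum>p\<in>F. fst p * y p * snd p)"
    using Edec by blast
  define K where "K = fst ` F \<union> snd ` F"
  have KE: "K \<subseteq> E" using F unfolding K_def by auto
  have Kf: "finite K" using F unfolding K_def by auto
  have o1: "k * x = 0" if "k \<in> E" "k \<notin> K" for k
  proof -
    have "k * x = (\<Sum>p\<in>F. k * fst p * y p * snd p)" unfolding x sum_distrib_left by (simp only: mult.assoc)
    also have "\<dots> = 0"
    proof (intro sum.neutral ballI)
      fix p assume "p \<in> F"
      then have fE: "fst p \<in> E" using F(2) by (auto simp: mem_Times_iff)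
      have "fst p \<in> K" unfolding K_def by (rule UnI1, rule imageI, fact)
      then have "k \<noteq> fst p" using that(2) by blast
      then have "k * fst p = 0" using Eorth that(1) fE by blast
      then show "k * fst p * y p * snd p = 0" by simp
    qed
    finally show ?thesis .
  qed
  have o2: "x * k = 0" if "k \<in> E" "k \<notin> K" for k
  proof -
    have "x * k = (\<Sum>p\<in>F. fst p * y p * (snd p * k))" unfolding x sum_distrib_right by (simp only: mult.assoc)
    also have "\<dots> = 0"
    proof (intro sum.neutral ballI)
      fix p assume "p \<in> F"
      then have fE: "snd p \<in> E" using F(2) by (auto simp: mem_Times_iff)
      have "snd p \<in> K" unfolding K_def by (rule UnI2, rule imageI, fact)
      then have "snd p \<noteq> k" using that(2) by blast
      then have "snd p * k = 0" using Eorth that(1) fE by blast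
      then show "fst p * y p * (snd p * k) = 0" by simp
    qed
    finally show ?thesis .
  qed
  have dl: "(\<Sum>k\<in>K'. e * k) = e" "(\<Sum>k\<in>K'. k * e) = e" if "e \<in> K'" "K' \<subseteq> E" "finite K'" for e K'
  proof -
    have eE: "e \<in> E" using that by auto
    have "(\<Sum>k\<in>K'. e * k) = e * e + (\<Sum>k\<in>K' - {e}. e * k)"
      by (rule sum.remove[OF that(3) that(1)])
    also have "(\<Sum>k\<in>K' - {e}. e * k) = 0"
    proof (intro sum.neutral ballI)
      fix k assume "k \<in> K' - {e}"
      then have "k \<in> E" "e \<noteq> k" using that(2) by auto
      then show "e * k = 0" using Eorth eE by blast
    qed
    finally show "(\<Sum>k\<in>K'. e * k) = e" using Eidem eE by simp
    have "(\<Sum>k\<in>K'. k * e) = e * e + (\<Sum>k\<in>K' - {e}. k * e)"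
      by (rule sum.remove[OF that(3) that(1)])
    also have "(\<Sum>k\<in>K' - {e}. k * e) = 0"
    proof (intro sum.neutral ballI)
      fix k assume "k \<in> K' - {e}"
      then have "k \<in> E" "k \<noteq> e" using that(2) by auto
      then show "k * e = 0" using Eorth eE by blast
    qed
    finally show "(\<Sum>k\<in>K'. k * e) = e" using Eidem eE by simp
  qed
  have main: "x = (\<Sum>k\<in>K'. x*k) \<and> x = (\<Sum>k\<in>K'. k*x)" if "K \<subseteq> K'" "K' \<subseteq> E" "finite K'" for K'
  proof
    have "(\<Sum>k\<in>K'. x*k) = (\<Sum>k\<in>K'. \<Sum>p\<in>F. fst p * y p * (snd p * k))"
      unfolding x sum_distrib_right by (simp only: mult.assoc)
    also have "\<dots> = (\<Sum>p\<in>F. \<Sum>k\<in>K'. fst p * y p * (snd p * k))" by (rule sum.swap)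
    also have "\<dots> = (\<Sum>p\<in>F. fst p * y p * (\<Sum>k\<in>K'. snd p * k))" by (simp only: sum_distrib_left)
    also have "\<dots> = (\<Sum>p\<in>F. fst p * y p * snd p)"
    proof (intro sum.cong refl)
      fix p assume "p \<in> F"
      then have "snd p \<in> K'" "fst p \<in> K'" using that(1) unfolding K_def by auto
      then show "fst p * y p * (\<Sum>k\<in>K'. snd p * k) = fst p * y p * snd p" using dl that by simp
    qed
    finally have c1: "(\<Sum>k\<in>K'. x*k) = (\<Sum>p\<in>F. fst p * y p * snd p)" .
    show "x = (\<Sum>k\<in>K'. x*k)" using trans[OF x c1[symmetric]] .
    have "(\<Sum>k\<in>K'. k*x) = (\<Sum>k\<in>K'. \<Sum>p\<in>F. (k * fst p) * (y p * snd p))"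
      unfolding x sum_distrib_left by (simp only: mult.assoc)
    also have "\<dots> = (\<Sum>p\<in>F. \<Sum>k\<in>K'. (k * fst p) * (y p * snd p))" by (rule sum.swap)
    also have "\<dots> = (\<Sum>p\<in>F. (\<Sum>k\<in>K'. k * fst p) * (y p * snd p))" by (simp only: sum_distrib_right)
    also have "\<dots> = (\<Sum>p\<in>F. fst p * (y p * snd p))"
    proof (intro sum.cong refl)
      fix p assume "p \<in> F"
      then have "snd p \<in> K'" "fst p \<in> K'" using that(1) unfolding K_def by auto
      then show "(\<Sum>k\<in>K'. k * fst p) * (y p * snd p) = fst p * (y p * snd p)" using dl that by simp
    qed
    finally have c2: "(\<Sum>k\<in>K'. k*x) = (\<Sum>p\<in>F. fst p * (y p * snd p))" .
    have "x = (\<Sum>p\<in>F. fst p * (y p * snd p))" using x by (simp only: mult.assoc)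
    then show "x = (\<Sum>k\<in>K'. k*x)" using trans[OF _ c2[symmetric]] by blast
  qed
  have A: "\<forall>k\<in>E. k \<notin> K \<longrightarrow> k*x = 0 \<and> x*k = 0" using o1 o2 by blast
  have B: "\<forall>K'. K \<subseteq> K' \<and> K' \<subseteq> E \<and> finite K' \<longrightarrow> x = (\<Sum>k\<in>K'. x*k) \<and> x = (\<Sum>k\<in>K'. k*x)"
    using main by blast
  show ?thesis by (rule exI[of _ K], intro conjI Kf KE A B)
qed

lemma locM:
  "\<exists>K. finite K \<and> K \<subseteq> E \<and> (\<forall>k\<in>E. k \<notin> K \<longrightarrow> actM k \<xi> = 0) \<and>
     (\<forall>K'. K \<subseteq> K' \<and> K' \<subseteq> E \<and> finite K' \<longrightarrow> \<xi> = (\<Sum>k\<in>K'. actM k \<xi>))"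
proof -
  obtain x where x: "actM x \<xi> = \<xi>" using qc' by blast
  obtain K where K: "finite K" "K \<subseteq> E" "\<forall>k\<in>E. k \<notin> K \<longrightarrow> k*x = 0 \<and> x*k = 0"
    "\<forall>K'. K \<subseteq> K' \<and> K' \<subseteq> E \<and> finite K' \<longrightarrow> x = (\<Sum>k\<in>K'. x*k) \<and> x = (\<Sum>k\<in>K'. k*x)"
    using loc[of x] by blast
  have "actM k \<xi> = 0" if "k \<in> E" "k \<notin> K" for k
    using K(3) that x act_mult[of k x \<xi>] by simp
  moreover have "\<xi> = (\<Sum>k\<in>K'. actM k \<xi>)" if "K \<subseteq> K'" "K' \<subseteq> E" "finite K'" for K'
  proof -
    have "(\<Sum>k\<in>K'. actM k \<xi>) = (\<Sum>k\<in>K'. actM (k*x) \<xi>)" using x by simp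
    also have "\<dots> = actM (\<Sum>k\<in>K'. k*x) \<xi>" by (simp add: act_suml)
    also have "(\<Sum>k\<in>K'. k*x) = x" using K(4) that by simp
    also have "actM x \<xi> = \<xi>" by (rule x)
    finally show ?thesis by simp
  qed
  ultimately show ?thesis using K(1,2) by blast
qed

end

lemma add_fun_sum:
  fixes f :: "'x::comm_monoid_add \<Rightarrow> 'y::ab_group_add"
  assumes "\<forall>x y. f (x+y) = f x + f y"
  shows "f (sum g I) = (\<Sum>i\<in>I. f (g i))"
proof -
  have "f (0+0) = f 0 + f 0" using assms by blast
  then have z: "f 0 = 0" by simp
  show ?thesis by (induction I rule: infinite_finite_induct) (auto simp: z assms)
qed

lemma bzero_eq: "bzero = 0" by (simp add: bzero_def zero_fun_def)
lemma badd_eq: "badd y1 y2 = y1 + y2" by (simp add: badd_def plus_fun_def)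
lemma bmult_eq: "bmult y1 y2 = y2 \<circ> y1" by (simp add: bmult_def)
lemma lam0: "(\<lambda>\<xi>. 0) = 0" by (simp add: zero_fun_def)

context ctx begin

abbreviation BB where "BB \<equiv> Bset sM actM"

lemma inB: "y \<in> BB \<longleftrightarrow> (\<forall>a b. y (a+b) = y a + y b) \<and> (\<forall>c a. y (sM c a) = sM c (y a)) \<and>
   (\<forall>a \<xi>. y (actM a \<xi>) = actM a (y \<xi>))"
  by (simp add: Bset_def lhom_def)

lemma B_add_app: "y \<in> BB \<Longrightarrow> y (a+b) = y a + y b" by (simp add: inB)
lemma B_sM_app: "y \<in> BB \<Longrightarrow> y (sM c a) = sM c (y a)" by (simp add: inB)
lemma B_act_app: "y \<in> BB \<Longrightarrow> y (actM a \<xi>) = actM a (y \<xi>)" by (simp add: inB)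
lemma B_0_app: "y \<in> BB \<Longrightarrow> y 0 = 0" using B_add_app[of y 0 0] by simp
lemma B_sum_app: "y \<in> BB \<Longrightarrow> y (sum f I) = (\<Sum>i\<in>I. y (f i))"
  by (rule add_fun_sum) (simp add: inB)

lemma B_id: "id \<in> BB" by (simp add: inB)
lemma B_zero: "0 \<in> BB" by (simp add: inB)
lemma B_plus: "y1 \<in> BB \<Longrightarrow> y2 \<in> BB \<Longrightarrow> y1 + y2 \<in> BB"
  unfolding inB plus_fun_apply by (simp add: add_ac)
lemma B_comp: "y1 \<in> BB \<Longrightarrow> y2 \<in> BB \<Longrightarrow> y2 \<circ> y1 \<in> BB" by (simp add: inB)
lemma B_sum: "(\<And>i. i \<in> I \<Longrightarrow> y i \<in> BB) \<Longrightarrow> sum y I \<in> BB"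
  by (induction I rule: infinite_finite_induct) (auto simp: B_zero B_plus)

lemma sM_comm: "sM c (sM d x) = sM d (sM c x)"
  using vsM by (simp add: vector_space_def mult.commute)

lemma B_scale: "y \<in> BB \<Longrightarrow> bscale sM c y \<in> BB"
  unfolding inB bscale_def by (simp add: sM_comm)

lemma slfB_add: "\<phi> \<in> SLF_B sM actM \<Longrightarrow> y1 \<in> BB \<Longrightarrow> y2 \<in> BB \<Longrightarrow> \<phi> (y1 + y2) = \<phi> y1 + \<phi> y2"
  by (simp add: SLF_B_def badd_eq)
lemma slfB_0: "\<phi> \<in> SLF_B sM actM \<Longrightarrow> \<phi> 0 = 0"
  using slfB_add[of \<phi> 0 0] B_zero by simp
lemma slfB_sum: "\<phi> \<in> SLF_B sM actM \<Longrightarrow> (\<And>i. i \<in> I \<Longrightarrow> y i \<in> BB) \<Longrightarrow> \<phi> (sum y I) = (\<Sum>i\<in>I. \<phi> (y i))"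
proof (induction I rule: infinite_finite_induct)
  case (infinite A) then show ?case using slfB_0[of \<phi>] by (simp add: zero_fun_def)
next
  case empty then show ?case using slfB_0[of \<phi>] by (simp add: zero_fun_def)
next
  case (insert x F)
  have s: "sum y (insert x F) = y x + sum y F" by (rule sum.insert[OF insert(1,2)])
  have a: "\<phi> (y x + sum y F) = \<phi> (y x) + \<phi> (sum y F)"
    using insert by (intro slfB_add B_sum) auto
  have ih: "\<phi> (sum y F) = (\<Sum>i\<in>F. \<phi> (y i))" using insert by auto
  show ?case unfolding s sum.insert[OF insert(1,2)] a ih ..
qed
lemma slfB_sym: "\<phi> \<in> SLF_B sM actM \<Longrightarrow> y1 \<in> BB \<Longrightarrow> y2 \<in> BB \<Longrightarrow> \<phi> (y2 \<circ> y1) = \<phi> (y1 \<circ> y2)"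
  by (simp add: SLF_B_def bmult_eq)
lemma slfB_scale: "\<phi> \<in> SLF_B sM actM \<Longrightarrow> y \<in> BB \<Longrightarrow> \<phi> (bscale sM c y) = c * \<phi> y"
  by (simp add: SLF_B_def)
lemma slfB_out: "\<phi> \<in> SLF_B sM actM \<Longrightarrow> y \<notin> BB \<Longrightarrow> \<phi> y = 0"
  by (simp add: SLF_B_def)

lemma slfA_add: "\<psi> \<in> SLF_A sA \<Longrightarrow> \<psi> (x + y) = \<psi> x + \<psi> y" by (simp add: SLF_A_def)
lemma slfA_scale: "\<psi> \<in> SLF_A sA \<Longrightarrow> \<psi> (sA c x) = c * \<psi> x" by (simp add: SLF_A_def)
lemma slfA_sym: "\<psi> \<in> SLF_A sA \<Longrightarrow> \<psi> (x * y) = \<psi> (y * x)" by (simp add: SLF_A_def)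
lemma slfA_sum: "\<psi> \<in> SLF_A sA \<Longrightarrow> \<psi> (sum f I) = (\<Sum>i\<in>I. \<psi> (f i))"
  by (rule add_fun_sum) (simp add: SLF_A_def)
lemma slfA_0: "\<psi> \<in> SLF_A sA \<Longrightarrow> \<psi> 0 = 0"
  using slfA_add[of \<psi> 0 0] by simp

lemma hMB_B: "hom_MB sM actM \<beta> \<Longrightarrow> \<beta> \<xi> \<in> BB" by (simp add: hom_MB_def)
lemma hMB_add: "hom_MB sM actM \<beta> \<Longrightarrow> \<beta> (\<xi> + \<eta>) = \<beta> \<xi> + \<beta> \<eta>" by (auto simp: hom_MB_def badd_def fun_eq_iff)
lemma hMB_sum: "hom_MB sM actM \<beta> \<Longrightarrow> \<beta> (sum f I) = (\<Sum>i\<in>I. \<beta> (f i))"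
  by (rule add_fun_sum) (use hMB_add in blast)
lemma hMB_0: "hom_MB sM actM \<beta> \<Longrightarrow> \<beta> 0 = 0" using hMB_sum[of \<beta> _ "{}"] by simp
lemma hMB_scale: "hom_MB sM actM \<beta> \<Longrightarrow> \<beta> (sM c \<xi>) = bscale sM c (\<beta> \<xi>)" by (simp add: hom_MB_def)
lemma hMB_B_app: "hom_MB sM actM \<beta> \<Longrightarrow> y \<in> BB \<Longrightarrow> \<beta> (y \<xi>) = y \<circ> \<beta> \<xi>" by (simp add: hom_MB_def bmult_eq)

lemma hBM_app: "hom_BM sM actM \<alpha> \<Longrightarrow> y \<in> BB \<Longrightarrow> \<alpha> y = y (\<alpha> id)"
proof -
  assume h: "hom_BM sM actM \<alpha>" and y: "y \<in> BB"
  have "\<alpha> (bmult id y) = y (\<alpha> id)" using h y B_id by (simp add: hom_BM_def)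
  then show ?thesis by (simp add: bmult_eq)
qed

end

locale lc = ctx + fixes L assumes lcL: "left_coord sM actM L"
begin

definition alp where "alp p = fst p id"
definition Fin where "Fin x = {p\<in>L. (\<exists>y\<in>BB. actM x (fst p y) \<noteq> 0) \<or> (\<exists>\<xi>. snd p (actM x \<xi>) \<noteq> 0)}"

lemma pairs: "p \<in> L \<Longrightarrow> hom_BM sM actM (fst p)" "p \<in> L \<Longrightarrow> hom_MB sM actM (snd p)"
  using lcL by (auto simp: left_coord_def)

lemma fin1: "finite {p\<in>L. snd p \<xi> \<noteq> 0}"
  using lcL by (simp add: left_coord_def bzero_eq)

lemma finFin: "finite (Fin x)"
  using lcL by (simp add: left_coord_def bzero_eq Fin_def)

lemma FinL: "Fin x \<subseteq> L" by (auto simp: Fin_def)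

lemma recon:
  assumes Q: "finite Q" "Q \<subseteq> L" "{p\<in>L. snd p \<xi> \<noteq> 0} \<subseteq> Q"
  shows "(\<Sum>p\<in>Q. snd p \<xi> (alp p)) = \<xi>"
proof -
  let ?S = "{p\<in>L. snd p \<xi> \<noteq> 0}"
  have "(\<Sum>p\<in>?S. fst p (snd p \<xi>)) = \<xi>" using lcL by (simp add: left_coord_def bzero_eq)
  moreover have "(\<Sum>p\<in>?S. fst p (snd p \<xi>)) = (\<Sum>p\<in>?S. snd p \<xi> (alp p))"
    by (rule sum.cong) (auto simp: alp_def pairs hBM_app hMB_B)
  moreover have "(\<Sum>p\<in>?S. snd p \<xi> (alp p)) = (\<Sum>p\<in>Q. snd p \<xi> (alp p))"
    by (rule sum.mono_neutral_left) (use Q in auto)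
  ultimately show ?thesis by simp
qed

definition G where "G x p = snd p (actM x (alp p))"

lemma G_B: "p \<in> L \<Longrightarrow> G x p \<in> BB" by (simp add: G_def pairs hMB_B)

lemma G_Fin: "p \<in> L \<Longrightarrow> G x p \<noteq> 0 \<Longrightarrow> p \<in> Fin x"
proof -
  assume "p \<in> L" "G x p \<noteq> 0"
  then have "snd p (actM x (alp p)) \<noteq> 0" by (simp add: G_def)
  then show "p \<in> Fin x" using \<open>p \<in> L\<close> unfolding Fin_def by blast
qed

lemma lp_eq:
  assumes \<phi>0: "\<phi> 0 = 0" and Q: "finite Q" "Q \<subseteq> L" "{p\<in>L. G x p \<noteq> 0} \<subseteq> Q"
  shows "left_ptr actM L \<phi> x = (\<Sum>p\<in>Q. \<phi> (G x p))"
proof -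
  have "left_ptr actM L \<phi> x = (\<Sum>p\<in>{p\<in>L. G x p \<noteq> 0}. \<phi> (G x p))"
    by (simp add: left_ptr_def G_def alp_def lam0)
  also have "\<dots> = (\<Sum>p\<in>Q. \<phi> (G x p))"
    by (rule sum.mono_neutral_left) (use Q \<phi>0 in auto)
  finally show ?thesis .
qed

lemma lp_Fin: "\<phi> 0 = 0 \<Longrightarrow> left_ptr actM L \<phi> x = (\<Sum>p\<in>Fin x. \<phi> (G x p))"
  by (rule lp_eq) (auto simp: finFin FinL G_Fin)

end

context lc begin

lemma G_add: "p \<in> L \<Longrightarrow> G (x1 + x2) p = G x1 p + G x2 p"
  unfolding G_def act_addl by (rule hMB_add[OF pairs(2)])

lemma G_scale: "p \<in> L \<Longrightarrow> G (sA c x) p = bscale sM c (G x p)"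
  by (simp add: G_def hMB_scale pairs)

lemma bscale0: "bscale sM c 0 = 0" by (simp add: bscale_def zero_fun_def)

definition H where "H x p q = snd p (actM x (alp q))"

lemma H_B: "p \<in> L \<Longrightarrow> H x p q \<in> BB" by (simp add: H_def pairs hMB_B)

lemma G_mult:
  assumes p: "p \<in> L" and Q: "finite Q" "Q \<subseteq> L" "Fin y \<subseteq> Q"
  shows "G (x * y) p = (\<Sum>q\<in>Q. H y q p \<circ> H x p q)"
proof -
  have sub: "{q\<in>L. snd q (actM y (alp p)) \<noteq> 0} \<subseteq> Q"
    using Q(3) unfolding Fin_def by blast
  have r: "actM y (alp p) = (\<Sum>q\<in>Q. H y q p (alp q))"
    unfolding H_def using recon[OF Q(1,2) sub] by simp
  have "G (x*y) p = snd p (actM x (\<Sum>q\<in>Q. H y q p (alp q)))"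
    by (simp add: G_def r[symmetric])
  also have "\<dots> = snd p (\<Sum>q\<in>Q. H y q p (actM x (alp q)))"
  proof -
    have "actM x (\<Sum>q\<in>Q. H y q p (alp q)) = (\<Sum>q\<in>Q. H y q p (actM x (alp q)))"
      unfolding act_sumr
    proof (intro sum.cong refl)
      fix q assume "q \<in> Q"
      then have "q \<in> L" using Q(2) by blast
      then show "actM x (H y q p (alp q)) = H y q p (actM x (alp q))" by (simp add: B_act_app H_B)
    qed
    then show ?thesis by simp
  qed
  also have "\<dots> = (\<Sum>q\<in>Q. snd p (H y q p (actM x (alp q))))"
    by (simp add: hMB_sum pairs p)
  also have "\<dots> = (\<Sum>q\<in>Q. H y q p \<circ> H x p q)"
    using Q(2) by (intro sum.cong refl) (simp add: hMB_B_app pairs p H_B subsetD[OF Q(2)] H_def[of x p] fun_eq_iff)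
  finally show ?thesis .
qed

lemma L_in:
  assumes \<phi>: "\<phi> \<in> SLF_B sM actM"
  shows "left_ptr actM L \<phi> \<in> SLF_A sA"
proof -
  have \<phi>0: "\<phi> 0 = 0" using slfB_0[OF \<phi>] .
  let ?lp = "left_ptr actM L \<phi>"
  have add: "?lp (x1 + x2) = ?lp x1 + ?lp x2" for x1 x2
  proof -
    let ?Q = "Fin x1 \<union> Fin x2"
    have Q: "finite ?Q" "?Q \<subseteq> L" using finFin FinL by auto
    have s1: "{p\<in>L. G x1 p \<noteq> 0} \<subseteq> ?Q" "{p\<in>L. G x2 p \<noteq> 0} \<subseteq> ?Q" using G_Fin by auto
    have s3: "{p\<in>L. G (x1+x2) p \<noteq> 0} \<subseteq> ?Q"
    proof
      fix p assume "p \<in> {p\<in>L. G (x1+x2) p \<noteq> 0}"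
      then have "p \<in> L" "G x1 p + G x2 p \<noteq> 0" by (auto simp: G_add)
      then have "G x1 p \<noteq> 0 \<or> G x2 p \<noteq> 0" by auto
      then show "p \<in> ?Q" using G_Fin \<open>p \<in> L\<close> by blast
    qed
    have "?lp (x1+x2) = (\<Sum>p\<in>?Q. \<phi> (G (x1+x2) p))" by (rule lp_eq[where \<phi>=\<phi> and x="x1+x2", OF \<phi>0 Q s3])
    also have "\<dots> = (\<Sum>p\<in>?Q. \<phi> (G x1 p) + \<phi> (G x2 p))"
      using Q(2) by (intro sum.cong refl) (simp add: G_add slfB_add[OF \<phi>] G_B subsetD[OF Q(2)])
    also have "\<dots> = (\<Sum>p\<in>?Q. \<phi> (G x1 p)) + (\<Sum>p\<in>?Q. \<phi> (G x2 p))" by (rule sum.distrib)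
    also have "\<dots> = ?lp x1 + ?lp x2" using lp_eq[where \<phi>=\<phi> and x=x1, OF \<phi>0 Q s1(1)] lp_eq[where \<phi>=\<phi> and x=x2, OF \<phi>0 Q s1(2)] by simp
    finally show ?thesis .
  qed
  have scl: "?lp (sA c x) = c * ?lp x" for c x
  proof -
    have Q: "finite (Fin x)" "Fin x \<subseteq> L" using finFin FinL by auto
    have s: "{p\<in>L. G (sA c x) p \<noteq> 0} \<subseteq> Fin x"
    proof
      fix p assume "p \<in> {p\<in>L. G (sA c x) p \<noteq> 0}"
      then have "p \<in> L" "bscale sM c (G x p) \<noteq> 0" by (auto simp: G_scale)
      then have "G x p \<noteq> 0" using bscale0 by auto
      then show "p \<in> Fin x" using G_Fin \<open>p \<in> L\<close> by blast
    qed
    have "?lp (sA c x) = (\<Sum>p\<in>Fin x. \<phi> (G (sA c x) p))" by (rule lp_eq[where \<phi>=\<phi> and x="sA c x", OF \<phi>0 Q s])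
    also have "\<dots> = (\<Sum>p\<in>Fin x. c * \<phi> (G x p))"
      using Q(2) by (intro sum.cong refl) (simp add: G_scale slfB_scale[OF \<phi>] G_B subsetD[OF Q(2)])
    also have "\<dots> = c * ?lp x" by (simp add: lp_Fin[where \<phi>=\<phi>, OF \<phi>0] sum_distrib_left)
    finally show ?thesis .
  qed
  have sym: "?lp (x * y) = ?lp (y * x)" for x y
  proof -
    let ?Q = "Fin x \<union> Fin y"
    have Q: "finite ?Q" "?Q \<subseteq> L" using finFin FinL by auto
    have sxy: "{p\<in>L. G (x*y) p \<noteq> 0} \<subseteq> ?Q"
    proof
      fix p assume "p \<in> {p\<in>L. G (x*y) p \<noteq> 0}"
      then have "p \<in> L" "snd p (actM x (actM y (alp p))) \<noteq> 0" by (auto simp: G_def)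
      then have "p \<in> Fin x" unfolding Fin_def by blast
      then show "p \<in> ?Q" by blast
    qed
    have syx: "{p\<in>L. G (y*x) p \<noteq> 0} \<subseteq> ?Q"
    proof
      fix p assume "p \<in> {p\<in>L. G (y*x) p \<noteq> 0}"
      then have "p \<in> L" "snd p (actM y (actM x (alp p))) \<noteq> 0" by (auto simp: G_def)
      then have "p \<in> Fin y" unfolding Fin_def by blast
      then show "p \<in> ?Q" by blast
    qed
    have e1: "?lp (x*y) = (\<Sum>p\<in>?Q. \<Sum>q\<in>?Q. \<phi> (H y q p \<circ> H x p q))"
    proof -
      have "?lp (x*y) = (\<Sum>p\<in>?Q. \<phi> (G (x*y) p))" by (rule lp_eq[where \<phi>=\<phi> and x="x*y", OF \<phi>0 Q sxy])
      also have "\<dots> = (\<Sum>p\<in>?Q. \<phi> (\<Sum>q\<in>?Q. H y q p \<circ> H x p q))"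
        using Q by (intro sum.cong refl) (simp add: G_mult[OF subsetD[OF Q(2)] Q(1) Q(2)])
      also have "\<dots> = (\<Sum>p\<in>?Q. \<Sum>q\<in>?Q. \<phi> (H y q p \<circ> H x p q))"
        using Q(2) by (intro sum.cong refl slfB_sum[OF \<phi>]) (auto intro!: B_comp H_B)
      finally show ?thesis .
    qed
    have e2: "?lp (y*x) = (\<Sum>p\<in>?Q. \<Sum>q\<in>?Q. \<phi> (H x q p \<circ> H y p q))"
    proof -
      have "?lp (y*x) = (\<Sum>p\<in>?Q. \<phi> (G (y*x) p))" by (rule lp_eq[where \<phi>=\<phi> and x="y*x", OF \<phi>0 Q syx])
      also have "\<dots> = (\<Sum>p\<in>?Q. \<phi> (\<Sum>q\<in>?Q. H x q p \<circ> H y p q))"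
        using Q by (intro sum.cong refl) (simp add: G_mult[OF subsetD[OF Q(2)] Q(1) Q(2)])
      also have "\<dots> = (\<Sum>p\<in>?Q. \<Sum>q\<in>?Q. \<phi> (H x q p \<circ> H y p q))"
        using Q(2) by (intro sum.cong refl slfB_sum[OF \<phi>]) (auto intro!: B_comp H_B)
      finally show ?thesis .
    qed
    have "(\<Sum>p\<in>?Q. \<Sum>q\<in>?Q. \<phi> (H x q p \<circ> H y p q)) = (\<Sum>q\<in>?Q. \<Sum>p\<in>?Q. \<phi> (H x q p \<circ> H y p q))"
      by (rule sum.swap)
    also have "\<dots> = (\<Sum>q\<in>?Q. \<Sum>p\<in>?Q. \<phi> (H y p q \<circ> H x q p))"
      using Q(2) by (intro sum.cong refl) (simp add: slfB_sym[OF \<phi>] H_B subsetD[OF Q(2)])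
    finally show ?thesis using e1 e2 by simp
  qed
  show ?thesis unfolding SLF_A_def using add scl sym by blast
qed

end

locale rc = ctx + fixes e n \<beta> \<beta>c assumes rcd: "right_coord sA sM actM e n \<beta> \<beta>c"
begin

definition m where "m j = \<beta> j e"

lemma e_idem: "e * e = e" using rcd by (simp add: right_coord_def idem_def)
lemma e_Ae: "e \<in> Ae e" using e_idem by (auto simp: Ae_def intro!: exI[of _ e])
lemma Ae_e: "a \<in> Ae e \<Longrightarrow> a * e = a" using e_idem by (auto simp: Ae_def mult.assoc)

lemma bc_lhom: "j < n \<Longrightarrow> lhom sM sA actM (*) UNIV (Ae e) (\<beta>c j)"
  using rcd by (simp add: right_coord_def)
lemma b_lhom: "j < n \<Longrightarrow> lhom sA sM (*) actM (Ae e) UNIV (\<beta> j)"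
  using rcd by (simp add: right_coord_def)

lemma bc_in: "j < n \<Longrightarrow> \<beta>c j \<xi> \<in> Ae e" using bc_lhom by (simp add: lhom_def)
lemma bc_add: "j < n \<Longrightarrow> \<beta>c j (\<xi> + \<eta>) = \<beta>c j \<xi> + \<beta>c j \<eta>" using bc_lhom by (simp add: lhom_def)
lemma bc_act: "j < n \<Longrightarrow> \<beta>c j (actM a \<xi>) = a * \<beta>c j \<xi>" using bc_lhom by (simp add: lhom_def)
lemma bc_sM: "j < n \<Longrightarrow> \<beta>c j (sM c \<xi>) = sA c (\<beta>c j \<xi>)" using bc_lhom by (simp add: lhom_def)
lemma bc_sum: "j < n \<Longrightarrow> \<beta>c j (sum f I) = (\<Sum>i\<in>I. \<beta>c j (f i))"
  by (rule add_fun_sum) (simp add: bc_add)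
lemma bc_e: "j < n \<Longrightarrow> \<beta>c j \<xi> * e = \<beta>c j \<xi>" by (simp add: Ae_e bc_in)

lemma b_act: "j < n \<Longrightarrow> a \<in> Ae e \<Longrightarrow> \<beta> j a = actM a (m j)"
proof -
  assume j: "j < n" and a: "a \<in> Ae e"
  have "\<beta> j (a * e) = actM a (\<beta> j e)" using b_lhom[OF j] e_Ae by (simp add: lhom_def)
  then show ?thesis using Ae_e[OF a] by (simp add: m_def)
qed

lemma recon_r: "(\<Sum>j<n. actM (\<beta>c j \<xi>) (m j)) = \<xi>"
proof -
  have "(\<Sum>j<n. \<beta> j (\<beta>c j \<xi>)) = \<xi>" using rcd by (simp add: right_coord_def)
  moreover have "(\<Sum>j<n. \<beta> j (\<beta>c j \<xi>)) = (\<Sum>j<n. actM (\<beta>c j \<xi>) (m j))"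
    by (intro sum.cong refl) (simp add: b_act bc_in)
  ultimately show ?thesis by simp
qed

definition rp where "rp \<psi> y = (\<Sum>j<n. \<psi> (\<beta>c j (y (m j))))"

lemma right_ptr_eq: "right_ptr sM actM e n \<beta> \<beta>c \<psi> y = (if y \<in> BB then rp \<psi> y else 0)"
  by (simp add: right_ptr_def rp_def m_def)

lemma comp_expand:
  assumes y1: "y1 \<in> BB" and y2: "y2 \<in> BB" and j: "j < n"
  shows "\<beta>c j (y2 (y1 (m k))) = (\<Sum>l<n. \<beta>c l (y1 (m k)) * \<beta>c j (y2 (m l)))"
proof -
  have "y2 (y1 (m k)) = y2 (\<Sum>l<n. actM (\<beta>c l (y1 (m k))) (m l))" by (simp only: recon_r)
  also have "\<dots> = (\<Sum>l<n. actM (\<beta>c l (y1 (m k))) (y2 (m l)))"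
    by (simp only: B_sum_app[OF y2] B_act_app[OF y2])
  finally show ?thesis by (simp add: bc_sum[OF j] bc_act[OF j])
qed

lemma R_in:
  assumes \<psi>: "\<psi> \<in> SLF_A sA"
  shows "right_ptr sM actM e n \<beta> \<beta>c \<psi> \<in> SLF_B sM actM"
proof -
  let ?r = "right_ptr sM actM e n \<beta> \<beta>c \<psi>"
  have add: "?r (badd y1 y2) = ?r y1 + ?r y2" if "y1 \<in> BB" "y2 \<in> BB" for y1 y2
  proof -
    have "badd y1 y2 \<in> BB" using that by (simp add: badd_eq B_plus)
    then have "?r (badd y1 y2) = (\<Sum>j<n. \<psi> (\<beta>c j (y1 (m j)) + \<beta>c j (y2 (m j))))"
      by (simp add: right_ptr_eq rp_def badd_def bc_add)
    also have "\<dots> = ?r y1 + ?r y2"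
      using that by (simp add: right_ptr_eq rp_def slfA_add[OF \<psi>] sum.distrib)
    finally show ?thesis .
  qed
  have scl: "?r (bscale sM c y) = c * ?r y" if "y \<in> BB" for c y
  proof -
    have "bscale sM c y \<in> BB" using that by (simp add: B_scale)
    then have "?r (bscale sM c y) = (\<Sum>j<n. c * \<psi> (\<beta>c j (y (m j))))"
      by (simp add: right_ptr_eq rp_def bscale_def bc_sM slfA_scale[OF \<psi>])
    also have "\<dots> = c * ?r y" using that by (simp add: right_ptr_eq rp_def sum_distrib_left)
    finally show ?thesis .
  qed
  have sym: "?r (bmult y1 y2) = ?r (bmult y2 y1)" if y1: "y1 \<in> BB" and y2: "y2 \<in> BB" for y1 y2
  proof -
    have m12: "y2 \<circ> y1 \<in> BB" "y1 \<circ> y2 \<in> BB" using that by (auto intro: B_comp)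
    have "?r (bmult y1 y2) = (\<Sum>j<n. \<psi> (\<beta>c j (y2 (y1 (m j)))))"
      using m12 by (simp add: right_ptr_eq rp_def bmult_eq)
    also have "\<dots> = (\<Sum>j<n. \<Sum>l<n. \<psi> (\<beta>c l (y1 (m j)) * \<beta>c j (y2 (m l))))"
      by (intro sum.cong refl) (simp add: comp_expand[OF y1 y2] slfA_sum[OF \<psi>])
    finally have a: "?r (bmult y1 y2) = (\<Sum>j<n. \<Sum>l<n. \<psi> (\<beta>c l (y1 (m j)) * \<beta>c j (y2 (m l))))" .
    have "?r (bmult y2 y1) = (\<Sum>j<n. \<psi> (\<beta>c j (y1 (y2 (m j)))))"
      using m12 by (simp add: right_ptr_eq rp_def bmult_eq)
    also have "\<dots> = (\<Sum>j<n. \<Sum>l<n. \<psi> (\<beta>c l (y2 (m j)) * \<beta>c j (y1 (m l))))"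
      by (intro sum.cong refl) (simp add: comp_expand[OF y2 y1] slfA_sum[OF \<psi>])
    also have "\<dots> = (\<Sum>l<n. \<Sum>j<n. \<psi> (\<beta>c l (y2 (m j)) * \<beta>c j (y1 (m l))))"
      by (rule sum.swap)
    also have "\<dots> = (\<Sum>l<n. \<Sum>j<n. \<psi> (\<beta>c j (y1 (m l)) * \<beta>c l (y2 (m j))))"
      by (simp add: slfA_sym[OF \<psi>])
    finally show ?thesis using a by simp
  qed
  have out: "?r y = 0" if "y \<notin> BB" for y using that by (simp add: right_ptr_eq)
  show ?thesis unfolding SLF_B_def using add scl sym out
    by (simp add: badd_eq bmult_eq B_plus B_comp B_scale)
qed

end

locale lcrc = lc + rc
begin

definition T where "T j p = (\<lambda>\<zeta>. actM (\<beta>c j \<zeta>) (actM e (alp p)))"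

lemma T_B: "j < n \<Longrightarrow> T j p \<in> BB"
  unfolding inB T_def by (simp add: bc_add bc_sM bc_act)

lemma G_a:
  assumes j: "j < n" and p: "p \<in> L" and y: "y \<in> BB"
  shows "G (\<beta>c j (y (m j))) p = T j p \<circ> (y \<circ> snd p (m j))"
proof -
  have "actM (\<beta>c j (y (m j))) (alp p) = T j p (y (m j))"
    using bc_e[OF j, of "y (m j)"] act_mult[of "\<beta>c j (y (m j))" e "alp p"]
    by (simp add: T_def)
  then have "G (\<beta>c j (y (m j))) p = snd p (T j p (y (m j)))" by (simp add: G_def)
  also have "\<dots> = T j p \<circ> snd p (y (m j))" by (rule hMB_B_app[OF pairs(2)[OF p] T_B[OF j]])
  also have "snd p (y (m j)) = y \<circ> snd p (m j)" by (rule hMB_B_app[OF pairs(2)[OF p] y])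
  finally show ?thesis .
qed

lemma RL:
  assumes \<phi>: "\<phi> \<in> SLF_B sM actM"
  shows "right_ptr sM actM e n \<beta> \<beta>c (left_ptr actM L \<phi>) = \<phi>"
proof
  fix y
  show "right_ptr sM actM e n \<beta> \<beta>c (left_ptr actM L \<phi>) y = \<phi> y"
  proof (cases "y \<in> BB")
    case False
    then show ?thesis by (simp add: right_ptr_eq slfB_out[OF \<phi>])
  next
    case y: True
    have \<phi>0: "\<phi> 0 = 0" using slfB_0[OF \<phi>] .
    define Q where "Q = (\<Union>j<n. {p\<in>L. snd p (m j) \<noteq> 0})"
    have Qf: "finite Q" unfolding Q_def using fin1 by auto
    have QL: "Q \<subseteq> L" unfolding Q_def by auto
    define U where "U j p = snd p (m j) \<circ> T j p" for j and p :: "(('b \<Rightarrow> 'b) \<Rightarrow> 'b) \<times> ('b \<Rightarrow> 'b \<Rightarrow> 'b)"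
    have UB: "U j p \<in> BB" if "j < n" "p \<in> L" for j p
      unfolding U_def using that by (intro B_comp T_B hMB_B pairs)
    have step: "left_ptr actM L \<phi> (\<beta>c j (y (m j))) = (\<Sum>p\<in>Q. \<phi> (U j p \<circ> y))" if j: "j < n" for j
    proof -
      have sub: "{p\<in>L. G (\<beta>c j (y (m j))) p \<noteq> 0} \<subseteq> Q"
      proof
        fix p assume "p \<in> {p\<in>L. G (\<beta>c j (y (m j))) p \<noteq> 0}"
        then have p: "p \<in> L" and ne: "T j p \<circ> (y \<circ> snd p (m j)) \<noteq> 0" by (auto simp: G_a[OF j _ y])
        have "snd p (m j) \<noteq> 0"
        proof
          assume "snd p (m j) = 0"
          then have "T j p \<circ> (y \<circ> snd p (m j)) = 0"
            by (simp add: fun_eq_iff B_0_app[OF y] B_0_app[OF T_B[OF j]])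
          then show False using ne by simp
        qed
        then show "p \<in> Q" unfolding Q_def using p j by blast
      qed
      have "left_ptr actM L \<phi> (\<beta>c j (y (m j))) = (\<Sum>p\<in>Q. \<phi> (G (\<beta>c j (y (m j))) p))"
        by (rule lp_eq[where \<phi>=\<phi> and x="\<beta>c j (y (m j))", OF \<phi>0 Qf QL sub])
      also have "\<dots> = (\<Sum>p\<in>Q. \<phi> (U j p \<circ> y))"
      proof (intro sum.cong refl)
        fix p assume "p \<in> Q"
        then have p: "p \<in> L" using QL by blast
        have "\<phi> (G (\<beta>c j (y (m j))) p) = \<phi> ((T j p \<circ> y) \<circ> snd p (m j))"
          by (simp add: G_a[OF j p y] o_assoc)
        also have "\<dots> = \<phi> (snd p (m j) \<circ> (T j p \<circ> y))"
          by (rule slfB_sym[OF \<phi> hMB_B[OF pairs(2)[OF p]] B_comp[OF y T_B[OF j]]])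
        also have "\<dots> = \<phi> (U j p \<circ> y)" by (simp add: U_def o_assoc)
        finally show "\<phi> (G (\<beta>c j (y (m j))) p) = \<phi> (U j p \<circ> y)" .
      qed
      finally show ?thesis .
    qed
    have Uid: "(\<Sum>j<n. \<Sum>p\<in>Q. U j p) = id"
    proof
      fix \<zeta>
      have "(\<Sum>j<n. \<Sum>p\<in>Q. U j p) \<zeta> = (\<Sum>j<n. \<Sum>p\<in>Q. U j p \<zeta>)" by (simp add: sum_fun_apply)
      also have "\<dots> = (\<Sum>j<n. actM (\<beta>c j \<zeta>) (actM e (\<Sum>p\<in>Q. snd p (m j) (alp p))))"
      proof (intro sum.cong refl)
        fix j assume "j \<in> {..<n}"
        have "(\<Sum>p\<in>Q. U j p \<zeta>) = (\<Sum>p\<in>Q. actM (\<beta>c j \<zeta>) (actM e (snd p (m j) (alp p))))"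
        proof (intro sum.cong refl)
          fix p assume "p \<in> Q"
          then have p: "p \<in> L" using QL by blast
          show "U j p \<zeta> = actM (\<beta>c j \<zeta>) (actM e (snd p (m j) (alp p)))"
            by (simp add: U_def T_def B_act_app[OF hMB_B[OF pairs(2)[OF p]]])
        qed
        then show "(\<Sum>p\<in>Q. U j p \<zeta>) = actM (\<beta>c j \<zeta>) (actM e (\<Sum>p\<in>Q. snd p (m j) (alp p)))"
          by (simp add: act_sumr)
      qed
      also have "\<dots> = (\<Sum>j<n. actM (\<beta>c j \<zeta>) (m j))"
      proof (intro sum.cong refl)
        fix j assume j: "j \<in> {..<n}"
        have "{p\<in>L. snd p (m j) \<noteq> 0} \<subseteq> Q" unfolding Q_def using j by blast
        then have "(\<Sum>p\<in>Q. snd p (m j) (alp p)) = m j" by (rule recon[OF Qf QL])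
        then show "actM (\<beta>c j \<zeta>) (actM e (\<Sum>p\<in>Q. snd p (m j) (alp p))) = actM (\<beta>c j \<zeta>) (m j)"
          using bc_e[of j \<zeta>] j act_mult[of "\<beta>c j \<zeta>" e "m j"] by simp
      qed
      also have "\<dots> = \<zeta>" by (rule recon_r)
      finally show "(\<Sum>j<n. \<Sum>p\<in>Q. U j p) \<zeta> = id \<zeta>" by simp
    qed
    have "right_ptr sM actM e n \<beta> \<beta>c (left_ptr actM L \<phi>) y = (\<Sum>j<n. \<Sum>p\<in>Q. \<phi> (U j p \<circ> y))"
      using y by (simp add: right_ptr_eq rp_def step)
    also have "\<dots> = (\<Sum>j<n. \<phi> (\<Sum>p\<in>Q. U j p \<circ> y))"
      using QL by (intro sum.cong refl slfB_sum[OF \<phi>, symmetric]) (auto intro!: B_comp UB y)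
    also have "\<dots> = \<phi> (\<Sum>j<n. \<Sum>p\<in>Q. U j p \<circ> y)"
      using QL by (intro slfB_sum[OF \<phi>, symmetric] B_sum) (auto intro!: B_comp UB y)
    also have "(\<Sum>j<n. \<Sum>p\<in>Q. U j p \<circ> y) = (\<Sum>j<n. \<Sum>p\<in>Q. U j p) \<circ> y"
      by (simp add: fun_eq_iff sum_fun_apply)
    also have "\<dots> = y" by (simp add: Uid)
    finally show ?thesis .
  qed
qed

end

locale l0 = ctx +
  fixes N :: "_ \<Rightarrow> nat" and Hs and X
  assumes Hadd: "k \<in> E \<Longrightarrow> l < N k \<Longrightarrow> Hs k l (\<xi> + \<eta>) = Hs k l \<xi> + Hs k l \<eta>"
    and HsM: "k \<in> E \<Longrightarrow> l < N k \<Longrightarrow> Hs k l (sM c \<xi>) = sA c (Hs k l \<xi>)"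
    and Hact: "k \<in> E \<Longrightarrow> l < N k \<Longrightarrow> Hs k l (actM a \<xi>) = a * Hs k l \<xi>"
    and Hsum: "k \<in> E \<Longrightarrow> (\<Sum>l<N k. Hs k l (X k l)) = k"
begin

definition xi0 where "xi0 = (SOME \<xi>. sM 1 \<xi> \<noteq> 0)"
definition C where "C l = (\<lambda>\<xi>. sM (of_nat (Suc l)) xi0 + sM 0 \<xi>)"
definition af where "af k l = (\<lambda>f. if f \<in> BB then f (actM k (X k l)) else if f = C l then xi0 else 0)"
definition ac where "ac k l = (\<lambda>\<xi> \<zeta>. actM (Hs k l \<zeta>) (actM k \<xi>))"
definition P where "P k l = (af k l, ac k l)"
definition I0 where "I0 = {(k,l). k \<in> E \<and> l < N k}"
definition L0 where "L0 = case_prod P ` I0"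

lemma sM1: "sM 1 \<xi> = \<xi>" using vsM by (simp add: vector_space_def)
lemma sM_eq0: "sM c \<xi> = 0 \<longleftrightarrow> c = 0 \<or> \<xi> = 0" using vector_space.scale_eq_0_iff[OF vsM] .
lemma sM_canc: "sM a \<xi> = sM b \<xi> \<longleftrightarrow> a = b \<or> \<xi> = 0" using vector_space.scale_cancel_right[OF vsM] .

lemma sM0: "sM 0 \<xi> = 0" by (simp add: vector_space.scale_eq_0_iff[OF vsM])
lemma C_app: "C l \<xi> = sM (of_nat (Suc l)) xi0" by (simp add: C_def sM0)

lemma xi0: "xi0 = 0 \<Longrightarrow> sM 1 \<xi> = 0"
proof (rule ccontr)
  assume "xi0 = 0" "sM 1 \<xi> \<noteq> 0"
  have "sM 1 xi0 \<noteq> 0" unfolding xi0_def using \<open>sM 1 \<xi> \<noteq> 0\<close> by (rule someI)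
  then show False using \<open>xi0 = 0\<close> by simp
qed

lemma Hs_sum: "k \<in> E \<Longrightarrow> l < N k \<Longrightarrow> Hs k l (sum f J) = (\<Sum>i\<in>J. Hs k l (f i))"
  by (rule add_fun_sum) (simp add: Hadd)

lemma ac_B: "k \<in> E \<Longrightarrow> l < N k \<Longrightarrow> ac k l \<xi> \<in> BB"
  unfolding inB ac_def by (simp add: Hadd HsM Hact)

lemma hMB_ac: "k \<in> E \<Longrightarrow> l < N k \<Longrightarrow> hom_MB sM actM (ac k l)"
  unfolding hom_MB_def using ac_B
  by (simp add: ac_def badd_def bscale_def bmult_eq fun_eq_iff B_act_app)

lemma af_B: "y \<in> BB \<Longrightarrow> af k l y = y (actM k (X k l))" by (simp add: af_def)

lemma hBM_af: "hom_BM sM actM (af k l)"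
  unfolding hom_BM_def
  by (simp add: af_B badd_eq bmult_eq B_plus B_comp B_scale) (simp add: bscale_def)

lemma ac_k: "k \<in> E \<Longrightarrow> ac k l (actM k \<xi>) = ac k l \<xi>"
  using Eidem by (simp add: ac_def act_mult[symmetric] mult.assoc del: act_mult)

lemma ac_0: "actM k \<xi> = 0 \<Longrightarrow> ac k l \<xi> = 0"
  by (simp add: ac_def fun_eq_iff)

lemma coll:
  assumes "(k,l) \<in> I0" "(k',l') \<in> I0" "(k,l) \<noteq> (k',l')" "P k l = P k' l'"
  shows "ac k l \<xi> = 0"
proof (cases "k = k'")
  case False
  have k: "k \<in> E" "k' \<in> E" using assms(1,2) by (auto simp: I0_def)
  have "ac k l \<xi> = ac k l (actM k \<xi>)" using ac_k[OF k(1)] by simp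
  also have "\<dots> = ac k' l' (actM k \<xi>)" using assms(4) by (simp add: P_def)
  also have "\<dots> = 0" using Eorth k False by (intro ac_0) (simp add: act_mult[symmetric] del: act_mult)
  finally show ?thesis .
next
  case True
  then have ll: "l \<noteq> l'" using assms(3) by simp
  have "xi0 = 0"
  proof (rule ccontr)
    assume ne: "xi0 \<noteq> 0"
    have Cne: "C l \<noteq> C l'"
    proof
      assume "C l = C l'"
      then have "sM (of_nat (Suc l)) xi0 = sM (of_nat (Suc l')) xi0" by (metis C_app)
      then show False using ne ll by (simp add: sM_canc)
    qed
    have CB: "C l \<notin> BB"
    proof
      assume "C l \<in> BB"
      then have "C l 0 = 0" by (rule B_0_app)
      moreover have "of_nat (Suc l) \<noteq> (0::complex)" by (simp only: of_nat_eq_0_iff)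
      ultimately show False using ne by (metis C_app sM_eq0)
    qed
    have "af k l (C l) = xi0" using CB by (simp add: af_def)
    moreover have "af k' l' (C l) = 0" using CB Cne by (simp add: af_def)
    moreover have "af k l = af k' l'" using assms(4) by (simp add: P_def)
    ultimately show False using ne by simp
  qed
  then show ?thesis using xi0 sM1 by (simp add: fun_eq_iff)
qed

lemma L0_reindex:
  assumes "finite J" "J \<subseteq> I0" "\<And>p. p \<in> L0 \<Longrightarrow> (\<forall>\<xi>. snd p \<xi> = 0) \<Longrightarrow> g p = 0"
  shows "sum g (case_prod P ` J) = (\<Sum>(k,l)\<in>J. g (P k l))"
proof -
  have "sum g (case_prod P ` J) = sum (g \<circ> case_prod P) J"
  proof (rule sum.reindex_nontrivial[OF assms(1)])
    fix x y assume xy: "x \<in> J" "y \<in> J" "x \<noteq> y" "case_prod P x = case_prod P y"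
    obtain k l k' l' where x: "x = (k,l)" and y: "y = (k',l')" by fastforce
    have "\<forall>\<xi>. snd (case_prod P x) \<xi> = 0"
      using coll[of k l k' l'] xy assms(2) x y by (auto simp: P_def)
    moreover have "case_prod P x \<in> L0" using xy assms(2) unfolding L0_def by blast
    ultimately show "g (case_prod P x) = 0" using assms(3) by blast
  qed
  then show ?thesis by (simp add: case_prod_beta' comp_def)
qed

lemma L0_elem: "p \<in> L0 \<Longrightarrow> \<exists>k l. k \<in> E \<and> l < N k \<and> p = P k l"
  by (auto simp: L0_def I0_def)

lemma lcL0: "left_coord sM actM L0"
  unfolding left_coord_def
proof (intro conjI allI ballI)
  fix p assume "p \<in> L0"
  then obtain k l where "k \<in> E" "l < N k" "p = P k l" using L0_elem by blast
  then show "hom_BM sM actM (fst p)" "hom_MB sM actM (snd p)"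
    by (auto simp: P_def hBM_af hMB_ac)
next
  fix \<xi>
  obtain K where K: "finite K" "K \<subseteq> E" "\<forall>k\<in>E. k \<notin> K \<longrightarrow> actM k \<xi> = 0"
    "\<forall>K'. K \<subseteq> K' \<and> K' \<subseteq> E \<and> finite K' \<longrightarrow> \<xi> = (\<Sum>k\<in>K'. actM k \<xi>)"
    using locM[of \<xi>] by blast
  define J where "J = Sigma K (\<lambda>k. {..<N k})"
  have Jf: "finite J" unfolding J_def using K(1) by auto
  have JI: "J \<subseteq> I0" unfolding J_def I0_def using K(2) by auto
  have sub: "{p\<in>L0. snd p \<xi> \<noteq> bzero} \<subseteq> case_prod P ` J"
  proof
    fix p assume "p \<in> {p\<in>L0. snd p \<xi> \<noteq> bzero}"
    then have pL: "p \<in> L0" and ne0: "snd p \<xi> \<noteq> 0" by (auto simp: bzero_eq)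
    obtain k l where kl: "k \<in> E" "l < N k" "p = P k l" using L0_elem[OF pL] by blast
    have ne: "ac k l \<xi> \<noteq> 0" using ne0 kl(3) by (simp add: P_def)
    have "k \<in> K" using ne K(3) kl ac_0 by blast
    then show "p \<in> case_prod P ` J" using kl unfolding J_def by force
  qed
  show "finite {p\<in>L0. snd p \<xi> \<noteq> bzero}" using sub Jf finite_subset by blast
  have "(\<Sum>p\<in>{p\<in>L0. snd p \<xi> \<noteq> bzero}. fst p (snd p \<xi>)) = (\<Sum>p\<in>case_prod P ` J. fst p (snd p \<xi>))"
  proof (rule sum.mono_neutral_left[OF _ sub])
    show "finite (case_prod P ` J)" using Jf by blast
    show "\<forall>p\<in>case_prod P ` J - {p\<in>L0. snd p \<xi> \<noteq> bzero}. fst p (snd p \<xi>) = 0"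
    proof
      fix p assume p: "p \<in> case_prod P ` J - {p\<in>L0. snd p \<xi> \<noteq> bzero}"
      then have "p \<in> L0" using JI unfolding L0_def by blast
      then have "snd p \<xi> = 0" using p by (auto simp: bzero_eq)
      obtain k l where kl: "p = P k l" using L0_elem[OF \<open>p \<in> L0\<close>] by blast
      show "fst p (snd p \<xi>) = 0" using \<open>snd p \<xi> = 0\<close> kl by (simp add: P_def af_B[OF B_zero])
    qed
  qed
  also have "\<dots> = (\<Sum>(k,l)\<in>J. fst (P k l) (snd (P k l) \<xi>))"
    by (rule L0_reindex[OF Jf JI]) (auto simp: zero_fun_def[symmetric] L0_elem P_def dest!: L0_elem intro: af_B[OF B_zero, simplified])
  also have "\<dots> = (\<Sum>k\<in>K. \<Sum>l<N k. actM (Hs k l (actM k (X k l))) (actM k \<xi>))"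
    unfolding J_def using K(1,2)
  proof (subst sum.Sigma[symmetric], simp_all, intro sum.cong refl)
    fix k l assume "k \<in> K" "l \<in> {..<N k}"
    then have k: "k \<in> E" "l < N k" using K(2) by auto
    show "fst (P k l) (snd (P k l) \<xi>) = actM (Hs k l (actM k (X k l))) (actM k \<xi>)"
      by (simp add: P_def af_B[OF ac_B[OF k]]) (simp add: ac_def)
  qed
  also have "\<dots> = (\<Sum>k\<in>K. actM k \<xi>)"
  proof (intro sum.cong refl)
    fix k assume "k \<in> K"
    then have k: "k \<in> E" using K(2) by blast
    have "(\<Sum>l<N k. actM (Hs k l (actM k (X k l))) (actM k \<xi>)) = actM (\<Sum>l<N k. k * Hs k l (X k l)) (actM k \<xi>)"
      by (simp add: act_suml Hact k)
    also have "\<dots> = actM (k * k) (actM k \<xi>)" by (simp add: sum_distrib_left[symmetric] Hsum k)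
    also have "\<dots> = actM k \<xi>" using Eidem k by (simp add: act_mult[symmetric] del: act_mult)
    finally show "(\<Sum>l<N k. actM (Hs k l (actM k (X k l))) (actM k \<xi>)) = actM k \<xi>" .
  qed
  also have "\<dots> = \<xi>" using K(1,2,4) by simp
  finally show "(\<Sum>p\<in>{p\<in>L0. snd p \<xi> \<noteq> bzero}. fst p (snd p \<xi>)) = \<xi>" .
next
  fix x
  show "finite {p\<in>L0. (\<exists>y\<in>Bset sM actM. actM x (fst p y) \<noteq> 0) \<or> (\<exists>\<xi>. snd p (actM x \<xi>) \<noteq> bzero)}"
  proof -
    obtain K where K: "finite K" "K \<subseteq> E" "\<forall>k\<in>E. k \<notin> K \<longrightarrow> k*x = 0 \<and> x*k = 0"
      using loc[of x] by blast
    define J where "J = Sigma K (\<lambda>k. {..<N k})"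
    have Jf: "finite J" unfolding J_def using K(1) by auto
    have "{p\<in>L0. (\<exists>y\<in>Bset sM actM. actM x (fst p y) \<noteq> 0) \<or> (\<exists>\<xi>. snd p (actM x \<xi>) \<noteq> bzero)}
          \<subseteq> case_prod P ` J"
    proof
      fix p assume p: "p \<in> {p\<in>L0. (\<exists>y\<in>Bset sM actM. actM x (fst p y) \<noteq> 0) \<or> (\<exists>\<xi>. snd p (actM x \<xi>) \<noteq> bzero)}"
      then obtain k l where kl: "k \<in> E" "l < N k" "p = P k l" using L0_elem by blast
      have "k \<in> K"
      proof (rule ccontr)
        assume "k \<notin> K"
        then have z: "k*x = 0" "x*k = 0" using K(3) kl by auto
        have "actM x (fst p y) = 0" if "y \<in> BB" for y
          using that kl z by (simp add: P_def af_B B_act_app[symmetric] act_mult[symmetric] B_0_app del: act_mult)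
        moreover have "snd p (actM x \<xi>) = 0" for \<xi>
          using kl z by (simp add: P_def ac_def fun_eq_iff act_mult[symmetric] mult.assoc del: act_mult)
        ultimately show False using p by (auto simp: bzero_eq)
      qed
      then show "p \<in> case_prod P ` J" using kl unfolding J_def by force
    qed
    then show ?thesis using Jf finite_subset by blast
  qed
qed

end

sublocale l0 \<subseteq> L0lc: lc sA sM actM E L0
  by unfold_locales (rule lcL0)

locale l0rc = l0 + rc
begin

lemma alpP: "L0lc.alp (P k l) = actM k (X k l)"
  by (simp add: L0lc.alp_def P_def af_B[OF B_id])

lemma W_val:
  assumes \<psi>: "\<psi> \<in> SLF_A sA" and k: "k \<in> E" "l < N k"
  shows "right_ptr sM actM e n \<beta> \<beta>c \<psi> (L0lc.G x (P k l)) = \<psi> (k * x * k * Hs k l (X k l))"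
proof -
  let ?W = "L0lc.G x (P k l)"
  have W: "?W = ac k l (actM x (actM k (X k l)))" by (simp add: L0lc.G_def alpP) (simp add: P_def)
  have WB: "?W \<in> BB" using W ac_B[OF k] by simp
  have Wm: "?W (m j) = actM (Hs k l (m j) * (k * x * k)) (X k l)" for j
    using W by (simp add: ac_def mult.assoc)
  have "right_ptr sM actM e n \<beta> \<beta>c \<psi> ?W = (\<Sum>j<n. \<psi> (\<beta>c j (?W (m j))))"
    using WB by (simp add: right_ptr_eq rp_def)
  also have "\<dots> = (\<Sum>j<n. \<psi> ((k * x * k) * (\<beta>c j (X k l) * Hs k l (m j))))"
  proof (intro sum.cong refl)
    fix j assume "j \<in> {..<n}"
    then have j: "j < n" by simp
    have "\<psi> (\<beta>c j (?W (m j))) = \<psi> (Hs k l (m j) * ((k * x * k) * \<beta>c j (X k l)))"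
      by (simp add: Wm bc_act[OF j] mult.assoc)
    also have "\<dots> = \<psi> (((k * x * k) * \<beta>c j (X k l)) * Hs k l (m j))" by (rule slfA_sym[OF \<psi>])
    finally show "\<psi> (\<beta>c j (?W (m j))) = \<psi> ((k * x * k) * (\<beta>c j (X k l) * Hs k l (m j)))"
      by (simp add: mult.assoc)
  qed
  also have "\<dots> = \<psi> ((k * x * k) * (\<Sum>j<n. \<beta>c j (X k l) * Hs k l (m j)))"
    by (simp add: slfA_sum[OF \<psi>, symmetric] sum_distrib_left)
  also have "(\<Sum>j<n. \<beta>c j (X k l) * Hs k l (m j)) = Hs k l (X k l)"
  proof -
    have "(\<Sum>j<n. \<beta>c j (X k l) * Hs k l (m j)) = (\<Sum>j<n. Hs k l (actM (\<beta>c j (X k l)) (m j)))"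
      by (simp add: Hact[OF k])
    also have "\<dots> = Hs k l (\<Sum>j<n. actM (\<beta>c j (X k l)) (m j))" by (simp add: Hs_sum[OF k])
    also have "\<dots> = Hs k l (X k l)" by (simp add: recon_r)
    finally show ?thesis .
  qed
  finally show ?thesis by (simp add: mult.assoc)
qed

lemma L0R:
  assumes \<psi>: "\<psi> \<in> SLF_A sA"
  shows "left_ptr actM L0 (right_ptr sM actM e n \<beta> \<beta>c \<psi>) = \<psi>"
proof
  fix x
  let ?\<phi> = "right_ptr sM actM e n \<beta> \<beta>c \<psi>"
  have \<phi>: "?\<phi> \<in> SLF_B sM actM" by (rule R_in[OF \<psi>])
  have \<phi>0: "?\<phi> 0 = 0" by (rule slfB_0[OF \<phi>])
  obtain K where K: "finite K" "K \<subseteq> E" "\<forall>k\<in>E. k \<notin> K \<longrightarrow> k*x = 0 \<and> x*k = 0"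
    "\<forall>K'. K \<subseteq> K' \<and> K' \<subseteq> E \<and> finite K' \<longrightarrow> x = (\<Sum>k\<in>K'. x*k) \<and> x = (\<Sum>k\<in>K'. k*x)"
    using loc[of x] by blast
  define J where "J = Sigma K (\<lambda>k. {..<N k})"
  have Jf: "finite J" unfolding J_def using K(1) by auto
  have JI: "J \<subseteq> I0" unfolding J_def I0_def using K(2) by auto
  have QL: "case_prod P ` J \<subseteq> L0" using JI unfolding L0_def by blast
  have sub: "{p\<in>L0. L0lc.G x p \<noteq> 0} \<subseteq> case_prod P ` J"
  proof
    fix p assume p: "p \<in> {p\<in>L0. L0lc.G x p \<noteq> 0}"
    then obtain k l where kl: "k \<in> E" "l < N k" "p = P k l" using L0_elem by blast
    have "k \<in> K"
    proof (rule ccontr)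
      assume "k \<notin> K"
      then have z: "k*x = 0" using K(3) kl by auto
      have "L0lc.G x p = 0"
        using kl z by (simp add: L0lc.G_def P_def ac_def fun_eq_iff act_mult[symmetric] mult.assoc del: act_mult)
      then show False using p by simp
    qed
    then show "p \<in> case_prod P ` J" using kl unfolding J_def by force
  qed
  have "left_ptr actM L0 ?\<phi> x = (\<Sum>p\<in>case_prod P ` J. ?\<phi> (L0lc.G x p))"
    by (rule L0lc.lp_eq[where \<phi>="?\<phi>" and x=x, OF \<phi>0 _ QL sub]) (use Jf in blast)
  also have "\<dots> = (\<Sum>(k,l)\<in>J. ?\<phi> (L0lc.G x (P k l)))"
  proof (rule L0_reindex[OF Jf JI])
    fix p assume "p \<in> L0" "\<forall>\<xi>. snd p \<xi> = 0"
    then show "?\<phi> (L0lc.G x p) = 0" by (simp add: L0lc.G_def \<phi>0)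
  qed
  also have "\<dots> = (\<Sum>k\<in>K. \<Sum>l<N k. \<psi> (k * x * k * Hs k l (X k l)))"
    unfolding J_def using K(1,2)
  proof (subst sum.Sigma[symmetric], simp_all, intro sum.cong refl)
    fix k l assume "k \<in> K" "l \<in> {..<N k}"
    then have k: "k \<in> E" "l < N k" using K(2) by auto
    show "?\<phi> (L0lc.G x (P k l)) = \<psi> (k * x * k * Hs k l (X k l))" by (rule W_val[OF \<psi> k])
  qed
  also have "\<dots> = (\<Sum>k\<in>K. \<psi> (x * k))"
  proof (intro sum.cong refl)
    fix k assume "k \<in> K"
    then have k: "k \<in> E" using K(2) by blast
    have kk: "k * k = k" using Eidem k by blast
    have "(\<Sum>l<N k. \<psi> (k * x * k * Hs k l (X k l))) = \<psi> (k * x * k * (\<Sum>l<N k. Hs k l (X k l)))"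
      by (simp add: slfA_sum[OF \<psi>, symmetric] sum_distrib_left)
    also have "\<dots> = \<psi> (k * (x * k))" by (simp add: Hsum k mult.assoc kk)
    also have "\<dots> = \<psi> ((x * k) * k)" by (rule slfA_sym[OF \<psi>])
    also have "\<dots> = \<psi> (x * k)" by (simp add: mult.assoc kk)
    finally show "(\<Sum>l<N k. \<psi> (k * x * k * Hs k l (X k l))) = \<psi> (x * k)" .
  qed
  also have "\<dots> = \<psi> (\<Sum>k\<in>K. x * k)" by (simp add: slfA_sum[OF \<psi>])
  also have "(\<Sum>k\<in>K. x * k) = x" using K(1,2,4) by auto
  finally show "left_ptr actM L0 ?\<phi> x = \<psi> x" .
qed

end

context ctx begin

lemma sumE_left: "finite K \<Longrightarrow> K \<subseteq> E \<Longrightarrow> e \<in> K \<Longrightarrow> (\<Sum>k\<in>K. e * k) = e"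
proof -
  assume K: "finite K" "K \<subseteq> E" "e \<in> K"
  have eE: "e \<in> E" using K by auto
  have "(\<Sum>k\<in>K. e * k) = e * e + (\<Sum>k\<in>K - {e}. e * k)" by (rule sum.remove[OF K(1) K(3)])
  also have "(\<Sum>k\<in>K - {e}. e * k) = 0"
  proof (intro sum.neutral ballI)
    fix k assume "k \<in> K - {e}"
    then have "k \<in> E" "e \<noteq> k" using K(2) by auto
    then show "e * k = 0" using Eorth eE by blast
  qed
  finally show ?thesis using Eidem eE by simp
qed

lemma unit_fin:
  fixes Xs :: "'a set"
  assumes "finite Xs"
  shows "\<exists>f. f * f = f \<and> (\<forall>x\<in>Xs. f * x = x)"
proof -
  define KK where "KK x = (SOME K. finite K \<and> K \<subseteq> E \<and> (\<forall>k\<in>E. k \<notin> K \<longrightarrow> k*x = 0 \<and> x*k = 0) \<and>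
     (\<forall>K'. K \<subseteq> K' \<and> K' \<subseteq> E \<and> finite K' \<longrightarrow> x = (\<Sum>k\<in>K'. x*k) \<and> x = (\<Sum>k\<in>K'. k*x)))" for x
  have KK: "finite (KK x) \<and> KK x \<subseteq> E \<and> (\<forall>k\<in>E. k \<notin> KK x \<longrightarrow> k*x = 0 \<and> x*k = 0) \<and>
     (\<forall>K'. KK x \<subseteq> K' \<and> K' \<subseteq> E \<and> finite K' \<longrightarrow> x = (\<Sum>k\<in>K'. x*k) \<and> x = (\<Sum>k\<in>K'. k*x))" for x
    unfolding KK_def by (rule someI_ex) (rule loc)
  define K where "K = (\<Union>x\<in>Xs. KK x)"
  have Kf: "finite K" unfolding K_def using assms KK by blast
  have KE: "K \<subseteq> E" unfolding K_def using KK by blast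
  define f where "f = (\<Sum>k\<in>K. k)"
  have fx: "f * x = x" if "x \<in> Xs" for x
  proof -
    have "KK x \<subseteq> K" unfolding K_def using that by blast
    then have "x = (\<Sum>k\<in>K. k*x)" using KK[of x] Kf KE by blast
    then show ?thesis unfolding f_def by (simp add: sum_distrib_right)
  qed
  have "f * f = (\<Sum>k\<in>K. \<Sum>k'\<in>K. k * k')" unfolding f_def sum_distrib_right by (simp only: sum_distrib_left)
  also have "\<dots> = (\<Sum>k\<in>K. k)" by (intro sum.cong refl sumE_left Kf KE)
  finally have "f * f = f" unfolding f_def .
  then show ?thesis using fx by blast
qed

lemma embA_exists:
  "\<exists>\<iota>::'a \<Rightarrow> 'a \<Rightarrow> complex. (\<forall>x y. \<iota> (x+y) = (\<lambda>i. \<iota> x i + \<iota> y i)) \<and>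
     (\<forall>c x. \<iota> (sA c x) = (\<lambda>i. c * \<iota> x i)) \<and> inj \<iota>"
proof (rule emb_exists[OF vsA])
  interpret vA: vector_space sA by (rule vsA)
  show "UNIV \<subseteq> vA.span (range id)" using vA.span_superset by simp
qed

end

context ctx begin

lemma rc_exists:
  assumes fg: "fin_gen sM actM UNIV" and pj: "lprojective sA sM actM UNIV"
  shows "\<exists>e n \<beta> \<beta>c. right_coord sA sM actM e n \<beta> \<beta>c"
proof -
  interpret vM: vector_space sM by (rule vsM)
  obtain G where G: "finite G" "UNIV = gen_sub sM actM G" using fg by (auto simp: fin_gen_def)
  obtain m :: nat and gs where gs: "G = gs ` {i. i < m}" using finite_imp_nat_seg_image_inj_on[OF G(1)] by blast
  define xg where "xg i = (SOME x. actM x (gs i) = gs i)" for i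
  have xg: "actM (xg i) (gs i) = gs i" for i unfolding xg_def by (rule someI_ex) (rule qc')
  obtain f where f: "f * f = f" "\<forall>x\<in>xg ` {..<m}. f * x = x"
    using unit_fin[of "xg ` {..<m}"] by blast
  have fgs: "actM f (gs i) = gs i" if "i < m" for i
  proof -
    have "actM f (gs i) = actM (f * xg i) (gs i)" by (simp add: xg)
    also have "f * xg i = xg i" using f(2) that by blast
    finally show ?thesis by (simp add: xg)
  qed
  have Aef: "z \<in> Ae f \<longleftrightarrow> z * f = z" for z
  proof
    assume "z \<in> Ae f" then obtain x where "z = x * f" by (auto simp: Ae_def)
    then show "z * f = z" using f(1) by (simp add: mult.assoc)
  next
    assume "z * f = z" then have "z = z * f" by simp
    then show "z \<in> Ae f" unfolding Ae_def by blast
  qed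
  define T0 where "T0 = {\<xi>. \<exists>y. \<xi> = (\<Sum>i<m. actM (y i) (gs i))}"
  have T0sub: "is_sub sM actM T0"
    unfolding is_sub_def T0_def
  proof (intro conjI allI ballI)
    show "0 \<in> {\<xi>. \<exists>y. \<xi> = (\<Sum>i<m. actM (y i) (gs i))}" by (auto intro!: exI[of _ "\<lambda>i. 0"])
  next
    fix x y assume "x \<in> {\<xi>. \<exists>y. \<xi> = (\<Sum>i<m. actM (y i) (gs i))}" "y \<in> {\<xi>. \<exists>y. \<xi> = (\<Sum>i<m. actM (y i) (gs i))}"
    then obtain a b where "x = (\<Sum>i<m. actM (a i) (gs i))" "y = (\<Sum>i<m. actM (b i) (gs i))" by blast
    then have "x + y = (\<Sum>i<m. actM (a i + b i) (gs i))" by (simp add: sum.distrib)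
    then show "x + y \<in> {\<xi>. \<exists>y. \<xi> = (\<Sum>i<m. actM (y i) (gs i))}" by - (rule CollectI, rule exI, assumption)
  next
    fix c x assume "x \<in> {\<xi>. \<exists>y. \<xi> = (\<Sum>i<m. actM (y i) (gs i))}"
    then obtain a where "x = (\<Sum>i<m. actM (a i) (gs i))" by blast
    then have "sM c x = (\<Sum>i<m. actM (sA c (a i)) (gs i))" by (simp add: sM_sum)
    then show "sM c x \<in> {\<xi>. \<exists>y. \<xi> = (\<Sum>i<m. actM (y i) (gs i))}" by - (rule CollectI, rule exI, assumption)
  next
    fix b x assume "x \<in> {\<xi>. \<exists>y. \<xi> = (\<Sum>i<m. actM (y i) (gs i))}"
    then obtain a where "x = (\<Sum>i<m. actM (a i) (gs i))" by blast
    then have "actM b x = (\<Sum>i<m. actM (b * a i) (gs i))" by (simp add: act_sumr)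
    then show "actM b x \<in> {\<xi>. \<exists>y. \<xi> = (\<Sum>i<m. actM (y i) (gs i))}" by - (rule CollectI, rule exI, assumption)
  qed
  have GT0: "G \<subseteq> T0"
  proof
    fix g assume "g \<in> G"
    then obtain i where i: "i < m" "g = gs i" using gs by blast
    have "(\<Sum>j<m. actM (if j = i then xg i else 0) (gs j)) = (\<Sum>j<m. if j = i then actM (xg i) (gs i) else 0)"
      by (intro sum.cong refl) simp
    also have "\<dots> = actM (xg i) (gs i)" using i by simp
    finally have "g = (\<Sum>j<m. actM (if j = i then xg i else 0) (gs j))" using i xg by simp
    then show "g \<in> T0" unfolding T0_def by - (rule CollectI, rule exI, assumption)
  qed
  have span: "\<exists>y. \<xi> = (\<Sum>i<m. actM (y i) (gs i))" for \<xi>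
  proof -
    have "gen_sub sM actM G \<subseteq> T0" unfolding gen_sub_def using T0sub GT0 by blast
    then have "\<xi> \<in> T0" using G(2) by blast
    then show ?thesis by (simp add: T0_def)
  qed
  have spanf: "\<exists>y. (\<forall>i. y i \<in> Ae f) \<and> \<xi> = (\<Sum>i<m. actM (y i) (gs i))" for \<xi>
  proof -
    obtain y where y: "\<xi> = (\<Sum>i<m. actM (y i) (gs i))" using span by blast
    have a: "\<xi> = (\<Sum>i<m. actM (y i * f) (gs i))" using y fgs by simp
    have b: "\<forall>i. y i * f \<in> Ae f" using f(1) by (simp add: Aef mult.assoc)
    show ?thesis apply (rule exI[of _ "\<lambda>i. y i * f"]) using a b by simp
  qed
  have "\<exists>\<iota>::'m \<Rightarrow> ('a \<times> nat) \<Rightarrow> complex. (\<forall>x y. \<iota> (x+y) = (\<lambda>i. \<iota> x i + \<iota> y i)) \<and>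
     (\<forall>c x. \<iota> (sM c x) = (\<lambda>i. c * \<iota> x i)) \<and> inj \<iota>"
  proof (rule emb_exists[OF vsM])
    show "UNIV \<subseteq> vM.span (range (\<lambda>(a,i). actM a (gs i)))"
    proof
      fix \<xi> :: 'm
      obtain y where y: "\<xi> = (\<Sum>i<m. actM (y i) (gs i))" using span by blast
      have "(\<Sum>i<m. actM (y i) (gs i)) \<in> vM.span (range (\<lambda>(a,i). actM a (gs i)))"
      proof (intro vM.span_sum vM.span_base)
        fix i show "actM (y i) (gs i) \<in> range (\<lambda>(a,i). actM a (gs i))" by (rule image_eqI[of _ _ "(y i, i)"]) auto
      qed
      then show "\<xi> \<in> vM.span (range (\<lambda>(a,i). actM a (gs i)))" using y by simp
    qed
  qed
  then obtain \<iota>M :: "'m \<Rightarrow> 'a univ" where \<iota>M: "\<forall>x y. \<iota>M (x+y) = (\<lambda>i. \<iota>M x i + \<iota>M y i)"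
    "\<forall>c x. \<iota>M (sM c x) = (\<lambda>i. c * \<iota>M x i)" "inj \<iota>M"
    by (elim exE conjE)
  obtain \<iota>A :: "'a \<Rightarrow> 'a \<Rightarrow> complex" where \<iota>A: "\<forall>x y. \<iota>A (x+y) = (\<lambda>i. \<iota>A x i + \<iota>A y i)"
    "\<forall>c x. \<iota>A (sA c x) = (\<lambda>i. c * \<iota>A x i)" "inj \<iota>A"
    using embA_exists by (elim exE conjE)
  define \<Phi>1 where "\<Phi>1 y = (\<lambda>(a,i). \<iota>A (y i) a)" for y :: "nat \<Rightarrow> 'a"
  define D1 where "D1 = {y :: nat \<Rightarrow> 'a. \<forall>i. y i \<in> Ae f}"
  define s1 where "s1 c y = (\<lambda>i. sA c (y i))" for c and y :: "nat \<Rightarrow> 'a"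
  define a01 where "a01 a y = (\<lambda>i. a * y i)" for a and y :: "nat \<Rightarrow> 'a"
  have \<Phi>1add: "\<Phi>1 (x + y) = \<Phi>1 x + \<Phi>1 y" for x y
    by (auto simp: \<Phi>1_def fun_eq_iff \<iota>A(1))
  have \<Phi>1scl: "\<Phi>1 (s1 c x) = uscale c (\<Phi>1 x)" for c x
    by (auto simp: \<Phi>1_def s1_def uscale_def fun_eq_iff \<iota>A(2))
  have \<Phi>1inj: "inj \<Phi>1"
  proof (rule injI)
    fix x y assume eq: "\<Phi>1 x = \<Phi>1 y"
    show "x = y"
    proof
      fix i
      have "\<iota>A (x i) a = \<iota>A (y i) a" for a using fun_cong[OF eq, of "(a,i)"] by (simp add: \<Phi>1_def)
      then have "\<iota>A (x i) = \<iota>A (y i)" by blast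
      then show "x i = y i" using \<iota>A(3) by (simp add: inj_eq)
    qed
  qed
  have \<iota>Madd: "\<iota>M (x + y) = \<iota>M x + \<iota>M y" for x y using \<iota>M(1) by (simp add: fun_eq_iff)
  have \<iota>Mscl: "\<iota>M (sM c x) = uscale c (\<iota>M x)" for c x using \<iota>M(2) by (simp add: uscale_def)
  define act1 where "act1 a v = \<Phi>1 (a01 a (inv_into D1 \<Phi>1 v))" for a v
  define act2 where "act2 a v = \<iota>M (actM a (inv_into UNIV \<iota>M v))" for a v
  have iv1: "inv_into D1 \<Phi>1 (\<Phi>1 y) = y" if "y \<in> D1" for y
    using that inj_on_subset[OF \<Phi>1inj] by (simp add: inv_into_f_f)
  have ivM: "inv_into UNIV \<iota>M (\<iota>M \<xi>) = \<xi>" for \<xi> using \<iota>M(3) by (simp add: inv_into_f_f)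
  have D1add: "x + y \<in> D1" if "x \<in> D1" "y \<in> D1" for x y
    using that by (simp add: D1_def Aef distrib_right)
  have D1scl: "s1 c x \<in> D1" if "x \<in> D1" for c x
    using that by (simp add: D1_def Aef s1_def sA_mult1[symmetric])
  have D1act: "a01 a x \<in> D1" if "x \<in> D1" for a x
    using that by (simp add: D1_def Aef a01_def mult.assoc)
  have lmod1: "is_lmod sA uscale act1 (\<Phi>1 ` D1)"
    unfolding act1_def
  proof (rule transport_lmod[where s=s1])
    show "\<forall>x\<in>D1. \<forall>y\<in>D1. \<Phi>1 (x + y) = \<Phi>1 x + \<Phi>1 y" by (simp add: \<Phi>1add)
    show "\<forall>c. \<forall>x\<in>D1. \<Phi>1 (s1 c x) = uscale c (\<Phi>1 x)" by (simp add: \<Phi>1scl)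
    show "inj_on \<Phi>1 D1" using inj_on_subset[OF \<Phi>1inj] by blast
    show "0 \<in> D1" by (simp add: D1_def Aef)
    show "\<forall>x\<in>D1. \<forall>y\<in>D1. x + y \<in> D1" using D1add by blast
    show "\<forall>c. \<forall>x\<in>D1. s1 c x \<in> D1" using D1scl by blast
    show "\<forall>a. \<forall>x\<in>D1. a01 a x \<in> D1" using D1act by blast
    show "\<forall>a b. \<forall>x\<in>D1. a01 (a * b) x = a01 a (a01 b x)" by (simp add: a01_def mult.assoc)
    show "\<forall>a b. \<forall>x\<in>D1. a01 (a + b) x = a01 a x + a01 b x" by (simp add: a01_def fun_eq_iff distrib_right)
    show "\<forall>a. \<forall>x\<in>D1. \<forall>y\<in>D1. a01 a (x + y) = a01 a x + a01 a y" by (simp add: a01_def fun_eq_iff distrib_left)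
    show "\<forall>c a. \<forall>x\<in>D1. a01 (sA c a) x = s1 c (a01 a x)" by (simp add: a01_def s1_def sA_mult1)
    show "\<forall>c a. \<forall>x\<in>D1. a01 a (s1 c x) = s1 c (a01 a x)" by (simp add: a01_def s1_def sA_mult2)
  qed
  have lmod2: "is_lmod sA uscale act2 (\<iota>M ` UNIV)"
    unfolding act2_def
  proof (rule transport_lmod[where s=sM])
    show "\<forall>x\<in>UNIV. \<forall>y\<in>UNIV. \<iota>M (x + y) = \<iota>M x + \<iota>M y" using \<iota>Madd by blast
    show "\<forall>c. \<forall>x\<in>UNIV. \<iota>M (sM c x) = uscale c (\<iota>M x)" using \<iota>Mscl by blast
  qed (simp_all add: \<iota>M(3))
  define f1 where "f1 v = \<iota>M (\<Sum>i<m. actM (inv_into D1 \<Phi>1 v i) (gs i))" for v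
  have f1P: "f1 (\<Phi>1 y) = \<iota>M (\<Sum>i<m. actM (y i) (gs i))" if "y \<in> D1" for y
    using that by (simp add: f1_def iv1)
  have f1hom: "lhom uscale uscale act1 act2 (\<Phi>1 ` D1) (\<iota>M ` UNIV) f1"
    unfolding lhom_def
  proof (intro conjI allI ballI)
    fix v assume "v \<in> \<Phi>1 ` D1"
    then show "f1 v \<in> \<iota>M ` UNIV" by (simp add: f1_def)
  next
    fix v w assume "v \<in> \<Phi>1 ` D1" "w \<in> \<Phi>1 ` D1"
    then obtain y z where yz: "y \<in> D1" "z \<in> D1" "v = \<Phi>1 y" "w = \<Phi>1 z" by blast
    have "f1 (v + w) = f1 (\<Phi>1 (y + z))" using yz by (simp add: \<Phi>1add)
    also have "\<dots> = \<iota>M (\<Sum>i<m. actM (y i + z i) (gs i))" using D1add[OF yz(1,2)] by (simp add: f1P)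
    also have "\<dots> = f1 v + f1 w" using yz by (simp add: f1P sum.distrib \<iota>Madd)
    finally show "f1 (v + w) = f1 v + f1 w" .
  next
    fix c v assume "v \<in> \<Phi>1 ` D1"
    then obtain y where y: "y \<in> D1" "v = \<Phi>1 y" by blast
    have "f1 (uscale c v) = f1 (\<Phi>1 (s1 c y))" using y by (simp add: \<Phi>1scl)
    also have "\<dots> = \<iota>M (\<Sum>i<m. actM (sA c (y i)) (gs i))" using D1scl[OF y(1)] by (simp add: f1P s1_def)
    also have "\<dots> = uscale c (f1 v)" using y by (simp add: f1P sM_sum[symmetric] \<iota>Mscl)
    finally show "f1 (uscale c v) = uscale c (f1 v)" .
  next
    fix a v assume "v \<in> \<Phi>1 ` D1"
    then obtain y where y: "y \<in> D1" "v = \<Phi>1 y" by blast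
    have "f1 (act1 a v) = f1 (\<Phi>1 (a01 a y))" using y by (simp add: act1_def iv1)
    also have "\<dots> = \<iota>M (\<Sum>i<m. actM (a * y i) (gs i))" using D1act[OF y(1)] by (simp add: f1P a01_def)
    also have "\<dots> = act2 a (f1 v)" using y by (simp add: f1P act2_def ivM act_sumr)
    finally show "f1 (act1 a v) = act2 a (f1 v)" .
  qed
  have f1surj: "f1 ` (\<Phi>1 ` D1) = \<iota>M ` UNIV"
  proof
    show "f1 ` (\<Phi>1 ` D1) \<subseteq> \<iota>M ` UNIV" by (auto simp: f1_def)
    show "\<iota>M ` UNIV \<subseteq> f1 ` (\<Phi>1 ` D1)"
    proof
      fix v assume "v \<in> \<iota>M ` UNIV"
      then obtain \<xi> where v: "v = \<iota>M \<xi>" by blast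
      obtain y where y: "\<forall>i. y i \<in> Ae f" "\<xi> = (\<Sum>i<m. actM (y i) (gs i))" using spanf by blast
      have yD: "y \<in> D1" using y(1) by (simp add: D1_def)
      have "v = f1 (\<Phi>1 y)" using v y(2) f1P[OF yD] by simp
      then show "v \<in> f1 ` (\<Phi>1 ` D1)" using yD by blast
    qed
  qed
  have ghom: "lhom sM uscale actM act2 UNIV (\<iota>M ` UNIV) \<iota>M"
    unfolding lhom_def by (simp add: \<iota>Madd \<iota>Mscl act2_def ivM)
  have "\<exists>h. lhom sM uscale actM act1 UNIV (\<Phi>1 ` D1) h \<and> (\<forall>\<xi>\<in>UNIV. f1 (h \<xi>) = \<iota>M \<xi>)"
    by (rule pj[unfolded lprojective_def, rule_format, of act1 "\<Phi>1 ` D1" act2 "\<iota>M ` UNIV" f1 \<iota>M])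
      (intro conjI lmod1 lmod2 f1hom f1surj ghom)
  then obtain h where h: "lhom sM uscale actM act1 UNIV (\<Phi>1 ` D1) h" "\<forall>\<xi>. f1 (h \<xi>) = \<iota>M \<xi>"
    by blast
  define z where "z \<xi> = inv_into D1 \<Phi>1 (h \<xi>)" for \<xi>
  have hS: "h \<xi> \<in> \<Phi>1 ` D1" for \<xi> using h(1) by (simp add: lhom_def)
  have zD: "z \<xi> \<in> D1" for \<xi> unfolding z_def using hS by (rule inv_into_into)
  have \<Phi>z: "\<Phi>1 (z \<xi>) = h \<xi>" for \<xi> unfolding z_def using hS by (rule f_inv_into_f)
  have zeq: "z \<xi> = y" if "\<Phi>1 y = h \<xi>" for \<xi> y
  proof -
    have "\<Phi>1 y = \<Phi>1 (z \<xi>)" using that \<Phi>z by simp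
    then have "y = z \<xi>" by (rule injD[OF \<Phi>1inj])
    then show ?thesis by simp
  qed
  have zadd: "z (\<xi> + \<eta>) = z \<xi> + z \<eta>" for \<xi> \<eta>
    using h(1) by (intro zeq) (simp add: lhom_def \<Phi>1add \<Phi>z)
  have zscl: "z (sM c \<xi>) = s1 c (z \<xi>)" for c \<xi>
    using h(1) by (intro zeq) (simp add: lhom_def \<Phi>1scl \<Phi>z)
  have zact: "z (actM a \<xi>) = a01 a (z \<xi>)" for a \<xi>
    using h(1) by (intro zeq) (simp add: lhom_def act1_def z_def[symmetric] \<Phi>z)
  have zrec: "(\<Sum>i<m. actM (z \<xi> i) (gs i)) = \<xi>" for \<xi>
  proof -
    have "\<iota>M (\<Sum>i<m. actM (z \<xi> i) (gs i)) = \<iota>M \<xi>"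
      using f1P[OF zD, of \<xi>] by (simp add: \<Phi>z h(2))
    then show ?thesis using \<iota>M(3) by (simp add: inj_eq)
  qed
  have "right_coord sA sM actM f m (\<lambda>i a. actM a (gs i)) (\<lambda>i \<xi>. z \<xi> i)"
    unfolding right_coord_def
  proof (intro conjI allI impI)
    show "idem f" using f(1) by (simp add: idem_def)
  next
    fix j :: nat assume "j < m"
    show "lhom sA sM (*) actM (Ae f) UNIV (\<lambda>a. actM a (gs j))" by (simp add: lhom_def)
    show "lhom sM sA actM (*) UNIV (Ae f) (\<lambda>\<xi>. z \<xi> j)"
      unfolding lhom_def using zD by (simp add: D1_def zadd zscl zact s1_def a01_def)
  next
    fix \<xi> show "(\<Sum>j<m. actM (z \<xi> j) (gs j)) = \<xi>" by (rule zrec)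
  qed
  then show ?thesis by blast
qed

end

context ctx begin

lemma gen_k:
  fixes \<Phi> :: "'a \<Rightarrow> 'a univ"
  assumes gen: "\<forall>(act :: 'a \<Rightarrow> 'a univ \<Rightarrow> 'a univ) S. coherent sA uscale act S \<longrightarrow>
        (\<exists>n\<ge>1. quotient_of_power sM actM UNIV uscale act S n)"
    and \<Phi>add: "\<And>x y. \<Phi> (x + y) = \<Phi> x + \<Phi> y"
    and \<Phi>scl: "\<And>c x. \<Phi> (sA c x) = uscale c (\<Phi> x)"
    and \<Phi>inj: "inj \<Phi>"
    and k: "k \<in> E"
  shows "\<exists>(Nk::nat) Hk Xk. (\<forall>l<Nk. (\<forall>\<xi> \<eta>. Hk l (\<xi>+\<eta>) = Hk l \<xi> + Hk l \<eta>) \<and>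
            (\<forall>c \<xi>. Hk l (sM c \<xi>) = sA c (Hk l \<xi>)) \<and> (\<forall>a \<xi>. Hk l (actM a \<xi>) = a * Hk l \<xi>)) \<and>
           (\<Sum>l<Nk. Hk l (Xk l)) = k"
proof -
  have kk: "k * k = k" using Eidem k by blast
  define D where "D = Ae k"
  have Dk: "z \<in> D \<longleftrightarrow> z * k = z" for z
  proof
    assume "z \<in> D" then obtain x where "z = x * k" by (auto simp: D_def Ae_def)
    then show "z * k = z" using kk by (simp add: mult.assoc)
  next
    assume "z * k = z" then have "z = z * k" by simp
    then show "z \<in> D" unfolding D_def Ae_def by blast
  qed
  define actk where "actk a v = \<Phi> (a * inv_into D \<Phi> v)" for a v
  define S where "S = \<Phi> ` D"
  have iv: "inv_into D \<Phi> (\<Phi> z) = z" if "z \<in> D" for z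
    using that inj_on_subset[OF \<Phi>inj] by (simp add: inv_into_f_f)
  have lmodk: "is_lmod sA uscale actk S"
    unfolding actk_def S_def
  proof (rule transport_lmod[where s=sA])
    show "\<forall>x\<in>D. \<forall>y\<in>D. \<Phi> (x + y) = \<Phi> x + \<Phi> y" using \<Phi>add by blast
    show "\<forall>c. \<forall>x\<in>D. \<Phi> (sA c x) = uscale c (\<Phi> x)" using \<Phi>scl by blast
    show "inj_on \<Phi> D" using inj_on_subset[OF \<Phi>inj] by blast
    show "0 \<in> D" by (simp add: Dk)
    show "\<forall>x\<in>D. \<forall>y\<in>D. x + y \<in> D" by (simp add: Dk distrib_right)
    show "\<forall>c. \<forall>x\<in>D. sA c x \<in> D" by (simp add: Dk sA_mult1[symmetric])
    show "\<forall>a. \<forall>x\<in>D. a * x \<in> D" by (simp add: Dk mult.assoc)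
    show "\<forall>a b. \<forall>x\<in>D. a * b * x = a * (b * x)" by (simp add: mult.assoc)
    show "\<forall>a b. \<forall>x\<in>D. (a + b) * x = a * x + b * x" by (simp add: distrib_right)
    show "\<forall>a. \<forall>x\<in>D. \<forall>y\<in>D. a * (x + y) = a * x + a * y" by (simp add: distrib_left)
    show "\<forall>c a. \<forall>x\<in>D. sA c a * x = sA c (a * x)" by (simp add: sA_mult1)
    show "\<forall>c a. \<forall>x\<in>D. a * sA c x = sA c (a * x)" by (simp add: sA_mult2)
  qed
  have kD: "k \<in> D" by (simp add: Dk kk)
  have actk_P: "actk a (\<Phi> z) = \<Phi> (a * z)" if "z \<in> D" for a z
    using that by (simp add: actk_def iv)
  have qck: "quasicoherent actk S"
    unfolding quasicoherent_def
  proof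
    fix v assume "v \<in> S"
    then obtain z where z: "z \<in> D" "v = \<Phi> z" by (auto simp: S_def)
    obtain u where u: "u * u = u" "\<forall>x\<in>{z}. u * x = x" using unit_fin[of "{z}"] by blast
    have "actk u v = v" using z u by (simp add: actk_P)
    then show "\<exists>x. actk x v = v" by blast
  qed
  have isS: "is_sub uscale actk S" using lmodk by (simp add: is_lmod_def)
  have fgk: "fin_gen uscale actk S"
    unfolding fin_gen_def
  proof (intro exI conjI)
    show "finite {\<Phi> k}" by simp
    show "{\<Phi> k} \<subseteq> S" using kD by (simp add: S_def)
    show "S = gen_sub uscale actk {\<Phi> k}"
    proof
      show "gen_sub uscale actk {\<Phi> k} \<subseteq> S" unfolding gen_sub_def using isS kD by (auto simp: S_def)
      show "S \<subseteq> gen_sub uscale actk {\<Phi> k}"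
      proof
        fix v assume "v \<in> S"
        then obtain z where z: "z \<in> D" "v = \<Phi> z" by (auto simp: S_def)
        have v: "v = actk z (\<Phi> k)" using z kD by (simp add: actk_P Dk)
        show "v \<in> gen_sub uscale actk {\<Phi> k}"
          unfolding gen_sub_def
        proof
          fix T assume "T \<in> {T. is_sub uscale actk T \<and> {\<Phi> k} \<subseteq> T}"
          then have "is_sub uscale actk T" "\<Phi> k \<in> T" by auto
          then show "v \<in> T" unfolding v is_sub_def by blast
        qed
      qed
    qed
  qed
  have coh: "coherent sA uscale actk S" unfolding coherent_def using lmodk qck fgk by blast
  have "\<exists>n\<ge>1. quotient_of_power sM actM UNIV uscale actk S n" using gen coh by blast
  then obtain n :: nat where "quotient_of_power sM actM UNIV uscale actk S n" by blast
  then obtain h where h: "\<forall>i<n. lhom sM uscale actM actk UNIV S (h i)"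
    "\<forall>y\<in>S. \<exists>\<xi>. (\<forall>i<n. \<xi> i \<in> UNIV) \<and> y = (\<Sum>i<n. h i (\<xi> i))"
    unfolding quotient_of_power_def by blast
  obtain \<xi> where \<xi>: "\<Phi> k = (\<Sum>i<n. h i (\<xi> i))" using h(2) kD by (auto simp: S_def)
  define Hk where "Hk i \<zeta> = inv_into D \<Phi> (h i \<zeta>)" for i \<zeta>
  have hS: "h i \<zeta> \<in> S" if "i < n" for i \<zeta> using h(1) that by (simp add: lhom_def)
  have HD: "Hk i \<zeta> \<in> D" if "i < n" for i \<zeta>
    unfolding Hk_def using hS[OF that] by (simp add: S_def inv_into_into)
  have \<Phi>H: "\<Phi> (Hk i \<zeta>) = h i \<zeta>" if "i < n" for i \<zeta>
    unfolding Hk_def using hS[OF that] by (simp add: S_def f_inv_into_f)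
  have Heq: "Hk i \<zeta> = y" if "i < n" "\<Phi> y = h i \<zeta>" for i \<zeta> y
  proof -
    have "\<Phi> y = \<Phi> (Hk i \<zeta>)" using that \<Phi>H by simp
    then have "y = Hk i \<zeta>" by (rule injD[OF \<Phi>inj])
    then show ?thesis by simp
  qed
  have props: "(\<forall>\<xi> \<eta>. Hk l (\<xi>+\<eta>) = Hk l \<xi> + Hk l \<eta>) \<and>
            (\<forall>c \<xi>. Hk l (sM c \<xi>) = sA c (Hk l \<xi>)) \<and> (\<forall>a \<xi>. Hk l (actM a \<xi>) = a * Hk l \<xi>)" if l: "l < n" for l
  proof (intro conjI allI)
    have lh: "lhom sM uscale actM actk UNIV S (h l)" using h(1) l by blast
    fix \<xi> \<eta> show "Hk l (\<xi>+\<eta>) = Hk l \<xi> + Hk l \<eta>"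
      using lh l by (intro Heq) (simp_all add: lhom_def \<Phi>add \<Phi>H)
  next
    have lh: "lhom sM uscale actM actk UNIV S (h l)" using h(1) l by blast
    fix c \<xi> show "Hk l (sM c \<xi>) = sA c (Hk l \<xi>)"
      using lh l by (intro Heq) (simp_all add: lhom_def \<Phi>scl \<Phi>H)
  next
    have lh: "lhom sM uscale actM actk UNIV S (h l)" using h(1) l by blast
    fix a \<xi> show "Hk l (actM a \<xi>) = a * Hk l \<xi>"
      using lh l HD by (intro Heq) (simp_all add: lhom_def actk_P[symmetric] \<Phi>H)
  qed
  have \<Phi>sum: "\<Phi> (sum g I) = (\<Sum>i\<in>I. \<Phi> (g i))" for g and I :: "nat set"
    by (rule add_fun_sum) (use \<Phi>add in blast)
  have "\<Phi> (\<Sum>l<n. Hk l (\<xi> l)) = \<Phi> k" using \<xi> by (simp add: \<Phi>sum \<Phi>H)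
  then have "(\<Sum>l<n. Hk l (\<xi> l)) = k" by (rule injD[OF \<Phi>inj])
  then show ?thesis using props by blast
qed

lemma gen_data:
  assumes gen: "\<forall>(act :: 'a \<Rightarrow> 'a univ \<Rightarrow> 'a univ) S. coherent sA uscale act S \<longrightarrow>
        (\<exists>n\<ge>1. quotient_of_power sM actM UNIV uscale act S n)"
  shows "\<exists>(N :: 'a \<Rightarrow> nat) Hs X. \<forall>k\<in>E. (\<forall>l<N k. (\<forall>\<xi> \<eta>. Hs k l (\<xi>+\<eta>) = Hs k l \<xi> + Hs k l \<eta>) \<and>
            (\<forall>c \<xi>. Hs k l (sM c \<xi>) = sA c (Hs k l \<xi>)) \<and> (\<forall>a \<xi>. Hs k l (actM a \<xi>) = a * Hs k l \<xi>)) \<and>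
           (\<Sum>l<N k. Hs k l (X k l)) = k"
proof -
  obtain \<iota>A :: "'a \<Rightarrow> 'a \<Rightarrow> complex" where \<iota>A: "\<forall>x y. \<iota>A (x+y) = (\<lambda>i. \<iota>A x i + \<iota>A y i)"
    "\<forall>c x. \<iota>A (sA c x) = (\<lambda>i. c * \<iota>A x i)" "inj \<iota>A"
    using embA_exists by (elim exE conjE)
  define \<Phi> where "\<Phi> x = (\<lambda>(a,i::nat). \<iota>A x a)" for x
  have \<Phi>add: "\<Phi> (x + y) = \<Phi> x + \<Phi> y" for x y by (auto simp: \<Phi>_def fun_eq_iff \<iota>A(1))
  have \<Phi>scl: "\<Phi> (sA c x) = uscale c (\<Phi> x)" for c x by (auto simp: \<Phi>_def uscale_def fun_eq_iff \<iota>A(2))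
  have \<Phi>inj: "inj \<Phi>"
  proof (rule injI)
    fix x y assume "\<Phi> x = \<Phi> y"
    then have "\<iota>A x a = \<iota>A y a" for a by (metis (mono_tags) \<Phi>_def case_prod_conv)
    then have "\<iota>A x = \<iota>A y" by blast
    then show "x = y" using \<iota>A(3) by (simp add: inj_eq)
  qed
  let ?P = "\<lambda>k (Nk::nat) Hk Xk. (\<forall>l<Nk. (\<forall>\<xi> \<eta>. Hk l (\<xi>+\<eta>) = Hk l \<xi> + Hk l \<eta>) \<and>
            (\<forall>c \<xi>. Hk l (sM c \<xi>) = sA c (Hk l \<xi>)) \<and> (\<forall>a \<xi>. Hk l (actM a \<xi>) = a * Hk l \<xi>)) \<and>
           (\<Sum>l<Nk. Hk l (Xk l)) = k"
  have "\<forall>k\<in>E. \<exists>t. ?P k (fst t) (fst (snd t)) (snd (snd t))"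
  proof
    fix k assume "k \<in> E"
    then obtain Nk Hk Xk where "?P k Nk Hk Xk" using gen_k[OF gen \<Phi>add \<Phi>scl \<Phi>inj] by blast
    then show "\<exists>t. ?P k (fst t) (fst (snd t)) (snd (snd t))" by (intro exI[of _ "(Nk, Hk, Xk)"]) simp
  qed
  from bchoice[OF this] obtain F where F: "\<forall>k\<in>E. ?P k (fst (F k)) (fst (snd (F k))) (snd (snd (F k)))" by blast
  show ?thesis
    by (rule exI[of _ "\<lambda>k. fst (F k)"], rule exI[of _ "\<lambda>k. fst (snd (F k))"], rule exI[of _ "\<lambda>k. snd (snd (F k))"])
       (use F in blast)
qed

end

theorem theorem9p4:
  fixes sA :: "complex \<Rightarrow> 'a::ring \<Rightarrow> 'a"
    and sM :: "complex \<Rightarrow> 'm::ab_group_add \<Rightarrow> 'm"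
    and actM :: "'a \<Rightarrow> 'm \<Rightarrow> 'm"
  assumes "strongly_AUF sA"
    and "proj_generator sA sM actM"
  shows "(\<exists>L. left_coord sM actM L) \<and>
         (\<exists>e n \<beta> \<beta>c. right_coord sA sM actM e n \<beta> \<beta>c) \<and>
         (\<forall>L e n \<beta> \<beta>c. left_coord sM actM L \<longrightarrow> right_coord sA sM actM e n \<beta> \<beta>c \<longrightarrow>
            bij_betw (right_ptr sM actM e n \<beta> \<beta>c) (SLF_A sA) (SLF_B sM actM) \<and>
            (\<forall>\<psi>1\<in>SLF_A sA. \<forall>\<psi>2\<in>SLF_A sA.
               right_ptr sM actM e n \<beta> \<beta>c (\<lambda>x. \<psi>1 x + \<psi>2 x) =
               (\<lambda>y. right_ptr sM actM e n \<beta> \<beta>c \<psi>1 y + right_ptr sM actM e n \<beta> \<beta>c \<psi>2 y)) \<and>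
            (\<forall>c. \<forall>\<psi>\<in>SLF_A sA.
               right_ptr sM actM e n \<beta> \<beta>c (\<lambda>x. c * \<psi> x) =
               (\<lambda>y. c * right_ptr sM actM e n \<beta> \<beta>c \<psi> y)) \<and>
            (\<forall>\<phi>\<in>SLF_B sM actM. left_ptr actM L \<phi> \<in> SLF_A sA \<and>
               right_ptr sM actM e n \<beta> \<beta>c (left_ptr actM L \<phi>) = \<phi>) \<and>
            (\<forall>\<psi>\<in>SLF_A sA. left_ptr actM L (right_ptr sM actM e n \<beta> \<beta>c \<psi>) = \<psi>))"
proof -
  have AUF: "AUF sA" using assms(1) by (simp add: strongly_AUF_def)
  then have calg: "calg sA" by (simp add: AUF_def)
  have "\<exists>E. (\<forall>e\<in>E. idem e) \<and>
       (\<forall>e\<in>E. \<forall>f\<in>E. e \<noteq> f \<longrightarrow> e * f = 0) \<and>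
       (\<forall>e\<in>E. \<forall>f\<in>E. \<exists>F. finite F \<and> {e * x * f | x. True} \<subseteq> module.span sA F) \<and>
       (\<forall>x. \<exists>F y. finite F \<and> F \<subseteq> E \<times> E \<and>
              x = (\<Sum>p\<in>F. fst p * y p * snd p))" using AUF by (simp add: AUF_def)
  then obtain E where EE: "(\<forall>e\<in>E. idem e) \<and>
       (\<forall>e\<in>E. \<forall>f\<in>E. e \<noteq> f \<longrightarrow> e * f = 0) \<and>
       (\<forall>e\<in>E. \<forall>f\<in>E. \<exists>F. finite F \<and> {e * x * f | x. True} \<subseteq> module.span sA F) \<and>
       (\<forall>x. \<exists>F y. finite F \<and> F \<subseteq> E \<times> E \<and>
              x = (\<Sum>p\<in>F. fst p * y p * snd p))"
    by (elim exE)
  have E1: "\<forall>e\<in>E. idem e" using EE by (rule conjunct1)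
  have E2: "\<forall>e\<in>E. \<forall>f\<in>E. e \<noteq> f \<longrightarrow> e * f = 0" using EE by (rule conjunct1[OF conjunct2])
  have E4: "\<forall>x. \<exists>F y. finite F \<and> F \<subseteq> E \<times> E \<and> x = (\<Sum>p\<in>F. fst p * y p * snd p)"
    using EE by (rule conjunct2[OF conjunct2[OF conjunct2]])
  have coh: "coherent sA sM actM UNIV" and pj: "lprojective sA sM actM UNIV"
    and gen: "\<forall>(act :: 'a \<Rightarrow> 'a univ \<Rightarrow> 'a univ) S. coherent sA uscale act S \<longrightarrow>
        (\<exists>n\<ge>1. quotient_of_power sM actM UNIV uscale act S n)"
    using assms(2) by (simp_all add: proj_generator_def)
  have lm: "is_lmod sA sM actM UNIV" and qc: "quasicoherent actM UNIV" and fg: "fin_gen sM actM UNIV"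
    using coh by (simp_all add: coherent_def)
  have ctxI: "ctx sA sM actM E"
    unfolding ctx_def using calg E1 E2 E4 lm qc by (simp add: idem_def)
  interpret C: ctx sA sM actM E by (rule ctxI)
  obtain N :: "'a \<Rightarrow> nat" and Hs X where data: "\<forall>k\<in>E. (\<forall>l<N k. (\<forall>\<xi> \<eta>. Hs k l (\<xi>+\<eta>) = Hs k l \<xi> + Hs k l \<eta>) \<and>
            (\<forall>c \<xi>. Hs k l (sM c \<xi>) = sA c (Hs k l \<xi>)) \<and> (\<forall>a \<xi>. Hs k l (actM a \<xi>) = a * Hs k l \<xi>)) \<and>
           (\<Sum>l<N k. Hs k l (X k l)) = k"
    using C.gen_data[OF gen] by blast
  have l0I: "l0 sA sM actM E N Hs X"
    by (intro l0.intro ctxI l0_axioms.intro) (use data in blast)+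
  interpret L0: l0 sA sM actM E N Hs X by (rule l0I)
  have P1: "\<exists>L. left_coord sM actM L" using L0.lcL0 by blast
  have P2: "\<exists>e n \<beta> \<beta>c. right_coord sA sM actM e n \<beta> \<beta>c" by (rule C.rc_exists[OF fg pj])
  have P3: "\<forall>L e n \<beta> \<beta>c. left_coord sM actM L \<longrightarrow> right_coord sA sM actM e n \<beta> \<beta>c \<longrightarrow>
            bij_betw (right_ptr sM actM e n \<beta> \<beta>c) (SLF_A sA) (SLF_B sM actM) \<and>
            (\<forall>\<psi>1\<in>SLF_A sA. \<forall>\<psi>2\<in>SLF_A sA.
               right_ptr sM actM e n \<beta> \<beta>c (\<lambda>x. \<psi>1 x + \<psi>2 x) =
               (\<lambda>y. right_ptr sM actM e n \<beta> \<beta>c \<psi>1 y + right_ptr sM actM e n \<beta> \<beta>c \<psi>2 y)) \<and>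
            (\<forall>c. \<forall>\<psi>\<in>SLF_A sA.
               right_ptr sM actM e n \<beta> \<beta>c (\<lambda>x. c * \<psi> x) =
               (\<lambda>y. c * right_ptr sM actM e n \<beta> \<beta>c \<psi> y)) \<and>
            (\<forall>\<phi>\<in>SLF_B sM actM. left_ptr actM L \<phi> \<in> SLF_A sA \<and>
               right_ptr sM actM e n \<beta> \<beta>c (left_ptr actM L \<phi>) = \<phi>) \<and>
            (\<forall>\<psi>\<in>SLF_A sA. left_ptr actM L (right_ptr sM actM e n \<beta> \<beta>c \<psi>) = \<psi>)"
  proof (intro allI impI)
    fix L e n \<beta> \<beta>c
    assume lc: "left_coord sM actM L" and rc: "right_coord sA sM actM e n \<beta> \<beta>c"
    have lcrcI: "lcrc sA sM actM E L e n \<beta> \<beta>c"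
      unfolding lcrc_def lc_def lc_axioms_def rc_def rc_axioms_def by (simp add: ctxI lc rc)
    interpret LR: lcrc sA sM actM E L e n \<beta> \<beta>c by (rule lcrcI)
    have l0rcI: "l0rc sA sM actM E N Hs X e n \<beta> \<beta>c"
      unfolding l0rc_def rc_def rc_axioms_def by (simp add: l0I ctxI rc)
    interpret L0R: l0rc sA sM actM E N Hs X e n \<beta> \<beta>c by (rule l0rcI)
    let ?r = "right_ptr sM actM e n \<beta> \<beta>c"
    have inj: "inj_on ?r (SLF_A sA)"
    proof (rule inj_onI)
      fix \<psi>1 \<psi>2 assume "\<psi>1 \<in> SLF_A sA" "\<psi>2 \<in> SLF_A sA" "?r \<psi>1 = ?r \<psi>2"
      note a = this
      have "\<psi>1 = left_ptr actM L0.L0 (?r \<psi>1)" using L0R.L0R[OF a(1)] by (rule sym)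
      also have "\<dots> = left_ptr actM L0.L0 (?r \<psi>2)" using \<open>?r \<psi>1 = ?r \<psi>2\<close> by simp
      also have "\<dots> = \<psi>2" by (rule L0R.L0R[OF a(2)])
      finally show "\<psi>1 = \<psi>2" .
    qed
    have img: "?r ` SLF_A sA = SLF_B sM actM"
    proof
      show "?r ` SLF_A sA \<subseteq> SLF_B sM actM" using LR.R_in by blast
      show "SLF_B sM actM \<subseteq> ?r ` SLF_A sA"
      proof
        fix \<phi> assume "\<phi> \<in> SLF_B sM actM"
        then have "\<phi> = ?r (left_ptr actM L \<phi>)" "left_ptr actM L \<phi> \<in> SLF_A sA"
          using LR.RL LR.L_in by auto
        then show "\<phi> \<in> ?r ` SLF_A sA" by blast
      qed
    qed
    have lin1: "?r (\<lambda>x. \<psi>1 x + \<psi>2 x) = (\<lambda>y. ?r \<psi>1 y + ?r \<psi>2 y)" for \<psi>1 \<psi>2 :: "'a \<Rightarrow> complex"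
      by (simp add: fun_eq_iff LR.right_ptr_eq LR.rp_def sum.distrib)
    have lin2: "?r (\<lambda>x. c * \<psi> x) = (\<lambda>y. c * ?r \<psi> y)" for c and \<psi> :: "'a \<Rightarrow> complex"
      by (simp add: fun_eq_iff LR.right_ptr_eq LR.rp_def sum_distrib_left)
    have last: "left_ptr actM L (?r \<psi>) = \<psi>" if \<psi>: "\<psi> \<in> SLF_A sA" for \<psi>
    proof -
      have r: "?r \<psi> \<in> SLF_B sM actM" by (rule LR.R_in[OF \<psi>])
      have "?r (left_ptr actM L (?r \<psi>)) = ?r \<psi>" by (rule LR.RL[OF r])
      moreover have "left_ptr actM L (?r \<psi>) \<in> SLF_A sA" by (rule LR.L_in[OF r])
      ultimately show ?thesis using inj \<psi> by (simp add: inj_on_eq_iff)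
    qed
    show "bij_betw ?r (SLF_A sA) (SLF_B sM actM) \<and>
            (\<forall>\<psi>1\<in>SLF_A sA. \<forall>\<psi>2\<in>SLF_A sA. ?r (\<lambda>x. \<psi>1 x + \<psi>2 x) = (\<lambda>y. ?r \<psi>1 y + ?r \<psi>2 y)) \<and>
            (\<forall>c. \<forall>\<psi>\<in>SLF_A sA. ?r (\<lambda>x. c * \<psi> x) = (\<lambda>y. c * ?r \<psi> y)) \<and>
            (\<forall>\<phi>\<in>SLF_B sM actM. left_ptr actM L \<phi> \<in> SLF_A sA \<and> ?r (left_ptr actM L \<phi>) = \<phi>) \<and>
            (\<forall>\<psi>\<in>SLF_A sA. left_ptr actM L (?r \<psi>) = \<psi>)"
    proof (intro conjI ballI allI)
      show "bij_betw ?r (SLF_A sA) (SLF_B sM actM)" unfolding bij_betw_def using inj img by blast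
    next
      fix \<psi>1 \<psi>2 show "?r (\<lambda>x. \<psi>1 x + \<psi>2 x) = (\<lambda>y. ?r \<psi>1 y + ?r \<psi>2 y)" by (rule lin1)
    next
      fix c \<psi> show "?r (\<lambda>x. c * \<psi> x) = (\<lambda>y. c * ?r \<psi> y)" by (rule lin2)
    next
      fix \<phi> assume "\<phi> \<in> SLF_B sM actM"
      then show "left_ptr actM L \<phi> \<in> SLF_A sA" "?r (left_ptr actM L \<phi>) = \<phi>"
        by (rule LR.L_in, rule LR.RL)
    next
      fix \<psi> assume "\<psi> \<in> SLF_A sA" then show "left_ptr actM L (?r \<psi>) = \<psi>" by (rule last)
    qed
  qed
  show ?thesis using P1 P2 P3 by (intro conjI)
qed

end
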